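(* Let $k,\ell\in\mathbb Z_{\ge1}$. The following identities of differential operators on $C^\infty(\mathbb R^3)$ hold (products denote composition): (1) if $k<\ell$: $\mathcal D_+^{(k,\ell)}=\mathcal D_2^{\ell}\mathcal D_1^{k}$, $\mathcal D_-^{(\ell-k,\ell)}=\mathcal D_1^{\ell-k}\mathcal D_2^{\ell}$, and $\mathcal D_c^{(2k-\ell;\ell)}=\mathcal D_1^{\ell-k}\mathcal D_+^{(k,\ell)}=\mathcal D_-^{(\ell-k,\ell)}\mathcal D_1^{k}=\mathcal D_1^{\ell-k}\mathcal D_2^{\ell}\mathcal D_1^{k}$; (2) if $k>\ell$: $\mathcal D_1^{k-\ell}\mathcal D_c^{(2k-\ell;\ell)}=\mathcal D_+^{(k,\ell)}=\mathcal D_2^{\ell}\mathcal D_1^{k}$; (3) if $k>\ell$: $\mathcal D_+^{(k,k-\ell)}=\mathcal D_2^{k-\ell}\mathcal D_1^{k}$, $\mathcal D_-^{(k,\ell)}=\mathcal D_1^{k}\mathcal D_2^{\ell}$, and $\mathcal D_c^{(k-2\ell;k)}=\mathcal D_+^{(k,k-\ell)}\mathcal D_2^{\ell}=\mathcal D_2^{k-\ell}\mathcal D_-^{(k,\ell)}=\mathcal D_2^{k-\ell}\mathcal D_1^{k}\mathcal D_2^{\ell}$; (4) if $k<\ell$: $\mathcal D_2^{\ell-k}\mathcal D_c^{(k-2\ell;k)}=\mathcal D_-^{(k,\ell)}=\mathcal D_1^{k}\mathcal D_2^{\ell}$; (5) $\mathcal D_c^{(k;k)}=\mathcal D_+^{(k,k)}=\mathcal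 D_2^{k}\mathcal D_1^{k}$; (6) $\mathcal D_c^{(-k;k)}=\mathcal D_-^{(k,k)}=\mathcal D_1^{k}\mathcal D_2^{k}$. (In each case these are factorizations of the $SL(3,\mathbb R)$-intertwining differential operators between principal series representations realized on the open Bruhat cell via $(x_1,x_2,x_3)\mapsto\exp(x_1E_{2,1}+x_2E_{3,2}+x_3E_{3,1})$.)
   Context: On $\mathbb R^3$ with coordinates $(x_1,x_2,x_3)$: $\mathcal D_1=\partial_{x_1}+\frac{x_2}2\partial_{x_3}$, $\mathcal D_2=\partial_{x_2}-\frac{x_1}2\partial_{x_3}$, $\mathcal D_3=\partial_{x_3}$ (these are the infinitesimal right translations by $E_{2,1},E_{3,2},E_{3,1}$ in exponential coordinates of the lower unitriangular group). Symmetrization $\mathbf s(\mathcal D_1^p\mathcal D_2^q\mathcal D_3^r)$ = average over all orderings of the product containing $\mathcal D_1$ $p$ times, $\mathcal D_2$ $q$ times, $\mathcal D_3$ $r$ times. Cayley continuants: $\mathrm{Cay}_m(x;y)=\sum_{j=0}^m\binom mj(\frac{x+y}2)^{\underline j}(\frac{x-y}2)^{\overline{m-j}}$, with $r^{\underline j}=r(r-1)\cdots(r-j+1)$ and $r^{\overline j}=r(r+1)\cdots(r+j-1)$ (equivalently the $m\times m$ tridiagonal determinant with diagonal $x$, superdiagonal $1,\dots,m-1$, subdiagonal $y,\dots,y-m+2$). For $a,b\in\mathbb Z_{\ge0}$, $s\in\mathbb C$: $\mathcal D_\pm^{(a,b)}=\sum_{m=0}^{\min(a,b)}\frac{(\pm1)^m}{2^m}m!\binom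 am\binom bm\mathbf s(\mathcal D_1^{a-m}\mathcal D_2^{b-m}\mathcal D_3^m)$ and $\mathcal D_c^{(s;a)}=\sum_{m=0}^a\frac1{2^m}\binom am\mathrm{Cay}_m(s;a)\mathbf s(\mathcal D_1^{a-m}\mathcal D_2^{a-m}\mathcal D_3^m)$. *)

theory Defs
  imports "HOL-Analysis.Analysis"
begin

type_synonym R3 = "real \<times> real \<times> real"

definition pd :: "nat \<Rightarrow> (R3 \<Rightarrow> complex) \<Rightarrow> (R3 \<Rightarrow> complex)" where
  "pd i f = (\<lambda>(x1,x2,x3).
     if i = 0 then vector_derivative (\<lambda>t. f (t,x2,x3)) (at x1)
     else if i = 1 then vector_derivative (\<lambda>t. f (x1,t,x3)) (at x2)
     else vector_derivative (\<lambda>t. f (x1,x2,t)) (at x3))"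

definition smooth3 :: "(R3 \<Rightarrow> complex) \<Rightarrow> bool" where
  "smooth3 f \<longleftrightarrow> (\<forall>is. set is \<subseteq> {0,1,2} \<longrightarrow> (\<forall>x. foldr pd is f differentiable (at x)))"

definition D1 :: "(R3 \<Rightarrow> complex) \<Rightarrow> (R3 \<Rightarrow> complex)" where
  "D1 f = (\<lambda>(x1,x2,x3). pd 0 f (x1,x2,x3) + of_real (x2/2) * pd 2 f (x1,x2,x3))"

definition D2 :: "(R3 \<Rightarrow> complex) \<Rightarrow> (R3 \<Rightarrow> complex)" where
  "D2 f = (\<lambda>(x1,x2,x3). pd 1 f (x1,x2,x3) - of_real (x1/2) * pd 2 f (x1,x2,x3))"

definition D3 :: "(R3 \<Rightarrow> complex) \<Rightarrow> (R3 \<Rightarrow> complex)" where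
  "D3 f = pd 2 f"

definition Dv :: "nat \<Rightarrow> (R3 \<Rightarrow> complex) \<Rightarrow> (R3 \<Rightarrow> complex)" where
  "Dv i = (if i = 0 then D1 else if i = 1 then D2 else D3)"

definition word_op :: "nat list \<Rightarrow> (R3 \<Rightarrow> complex) \<Rightarrow> (R3 \<Rightarrow> complex)" where
  "word_op w f = foldr Dv w f"

definition words :: "nat \<Rightarrow> nat \<Rightarrow> nat \<Rightarrow> nat list set" where
  "words p q r = {w. length w = p + q + r \<and> set w \<subseteq> {0,1,2} \<and>
      count_list w 0 = p \<and> count_list w 1 = q \<and> count_list w 2 = r}"

text \<open>Symmetrization s(D1^p D2^q D3^r): average over all orderings (equivalently over all
  distinct words, each occurring p!q!r! times among the orderings).\<close>
definition symm :: "nat \<Rightarrow> nat \<Rightarrow> nat \<Rightarrow> (R3 \<Rightarrow> complex) \<Rightarrow> (R3 \<Rightarrow> complex)" where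
  "symm p q r f = (\<lambda>x. (\<Sum>w\<in>words p q r. word_op w f x) / of_nat (card (words p q r)))"

definition falling :: "complex \<Rightarrow> nat \<Rightarrow> complex" where
  "falling z j = (\<Prod>i<j. z - of_nat i)"

definition rising :: "complex \<Rightarrow> nat \<Rightarrow> complex" where
  "rising z j = (\<Prod>i<j. z + of_nat i)"

definition Cay :: "nat \<Rightarrow> complex \<Rightarrow> complex \<Rightarrow> complex" where
  "Cay m x y = (\<Sum>j\<le>m. of_nat (m choose j) * falling ((x + y) / 2) j * rising ((x - y) / 2) (m - j))"

definition Dpm :: "complex \<Rightarrow> nat \<Rightarrow> nat \<Rightarrow> (R3 \<Rightarrow> complex) \<Rightarrow> (R3 \<Rightarrow> complex)" where
  "Dpm sg a b f = (\<lambda>x. \<Sum>m\<le>min a b. sg ^ m / 2 ^ m * of_nat (fact m * (a choose m) * (b choose m))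
        * symm (a - m) (b - m) m f x)"

abbreviation Dplus where "Dplus \<equiv> Dpm 1"
abbreviation Dminus where "Dminus \<equiv> Dpm (-1)"

definition Dc :: "complex \<Rightarrow> nat \<Rightarrow> (R3 \<Rightarrow> complex) \<Rightarrow> (R3 \<Rightarrow> complex)" where
  "Dc s a f = (\<lambda>x. \<Sum>m\<le>a. 1 / 2 ^ m * of_nat (a choose m) * Cay m s (of_nat a)
        * symm (a - m) (a - m) m f x)"

end

theory Submission
  imports Defs "HOL-Computational_Algebra.Formal_Power_Series"
begin

definition ev :: "nat \<Rightarrow> R3" where
  "ev i = (if i = 0 then (1,0,0) else if i = 1 then (0,1,0) else (0,0,1))"

lemma pd_eq:
  assumes "(h has_derivative H) (at p)"
  shows "pd i h p = H (ev i)"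
proof -
  obtain x1 x2 x3 where p: "p = (x1,x2,x3)" by (cases p) auto
  have lin: "linear H" using assms has_derivative_linear by blast
  show ?thesis
  proof (cases "i = 0")
    case True
    have d: "((\<lambda>t. (t,x2,x3)) has_derivative (\<lambda>t. (t,0,0))) (at x1)"
    proof -
      have "((\<lambda>t::real. (t, (x2,x3))) has_derivative (\<lambda>t. (t, (0::real\<times>real)))) (at x1)"
        by (intro has_derivative_Pair has_derivative_ident has_derivative_const)
      then show ?thesis by (simp add: zero_prod_def)
    qed
    have "((\<lambda>t. h (t,x2,x3)) has_derivative (\<lambda>t. H (t,0,0))) (at x1)"
      using has_derivative_compose[OF d] assms p by simp
    moreover have "(\<lambda>t. H (t,0,0)) = (\<lambda>t. t *\<^sub>R H (1,0,0))"
      apply (rule ext)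
        subgoal for t using linear_scale[OF lin, of t "(1,0,0)"] by simp
        done
    ultimately have "((\<lambda>t. h (t,x2,x3)) has_vector_derivative H (1,0,0)) (at x1)"
      by (simp add: has_vector_derivative_def)
    then show ?thesis using True p by (simp add: pd_def ev_def vector_derivative_at)
  next
    case False
    show ?thesis
    proof (cases "i = 1")
      case True
      have d: "((\<lambda>t. (x1,t,x3)) has_derivative (\<lambda>t. (0,t,0))) (at x2)"
        by (intro has_derivative_Pair has_derivative_ident has_derivative_const)
      have "((\<lambda>t. h (x1,t,x3)) has_derivative (\<lambda>t. H (0,t,0))) (at x2)"
        using has_derivative_compose[OF d] assms p by simp
      moreover have "(\<lambda>t. H (0,t,0)) = (\<lambda>t. t *\<^sub>R H (0,1,0))"
        apply (rule ext)
        subgoal for t using linear_scale[OF lin, of t "(0,1,0)"] by simp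
        done
      ultimately have "((\<lambda>t. h (x1,t,x3)) has_vector_derivative H (0,1,0)) (at x2)"
        by (simp add: has_vector_derivative_def)
      then show ?thesis using True p by (simp add: pd_def ev_def vector_derivative_at)
    next
      case F2: False
      have d: "((\<lambda>t. (x1,x2,t)) has_derivative (\<lambda>t. (0,0,t))) (at x3)"
        by (intro has_derivative_Pair has_derivative_ident has_derivative_const)
      have "((\<lambda>t. h (x1,x2,t)) has_derivative (\<lambda>t. H (0,0,t))) (at x3)"
        using has_derivative_compose[OF d] assms p by simp
      moreover have "(\<lambda>t. H (0,0,t)) = (\<lambda>t. t *\<^sub>R H (0,0,1))"
        apply (rule ext)
        subgoal for t using linear_scale[OF lin, of t "(0,0,1)"] by simp
        done
      ultimately have "((\<lambda>t. h (x1,x2,t)) has_vector_derivative H (0,0,1)) (at x3)"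
        by (simp add: has_vector_derivative_def)
      then show ?thesis using False F2 p by (simp add: pd_def ev_def vector_derivative_at)
    qed
  qed
qed

lemma pd_frechet:
  assumes "h differentiable (at p)"
  shows "pd i h p = frechet_derivative h (at p) (ev i)"
  using pd_eq[OF frechet_derivative_works[THEN iffD1, OF assms]] .

lemma norm_ev [simp]: "norm (ev i) = 1"
  by (simp add: ev_def norm_Pair)

lemma slice_deriv:
  assumes "\<forall>y. g differentiable (at y)"
  shows "((\<lambda>s. g (q + s *\<^sub>R ev i)) has_vector_derivative pd i g (q + s *\<^sub>R ev i)) (at s within S)"
proof -
  let ?y = "q + s *\<^sub>R ev i"
  obtain G where G: "(g has_derivative G) (at ?y)"
    using assms differentiable_def by blast
  have lin: "linear G" using G has_derivative_linear by blast
  have d: "((\<lambda>s. q + s *\<^sub>R ev i) has_derivative (\<lambda>t. t *\<^sub>R ev i)) (at s within S)"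
    by (auto intro!: derivative_eq_intros)
  have "((\<lambda>s. g (q + s *\<^sub>R ev i)) has_derivative (\<lambda>t. G (t *\<^sub>R ev i))) (at s within S)"
    using has_derivative_in_compose[OF d, of g G] G
    by (simp add: has_derivative_at_withinI o_def)
  moreover have "(\<lambda>t. G (t *\<^sub>R ev i)) = (\<lambda>t. t *\<^sub>R G (ev i))"
    apply (rule ext)
    subgoal for t using linear_scale[OF lin, of t "ev i"] by simp
    done
  ultimately show ?thesis
    using pd_eq[OF G, of i] by (simp add: has_vector_derivative_def)
qed

lemma delta_approx:
  fixes g :: "R3 \<Rightarrow> complex"
  assumes gd: "\<forall>y. g differentiable (at y)"
    and ud: "(pd i g has_derivative U) (at p)"
    and e: "\<epsilon> > 0"
  shows "\<exists>\<delta>>0. \<forall>h. \<bar>h\<bar> < \<delta> \<longrightarrow>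
     norm (g (p + h *\<^sub>R ev j + h *\<^sub>R ev i) - g (p + h *\<^sub>R ev i) - g (p + h *\<^sub>R ev j) + g p
           - of_real (h*h) * U (ev j)) \<le> 9 * \<epsilon> * (h*h)"
proof -
  define u where "u = pd i g"
  from ud obtain d where d: "d>0" "\<forall>y. norm (y - p) < d \<longrightarrow> norm (u y - u p - U (y - p)) \<le> \<epsilon> * norm (y - p)"
    using e unfolding has_derivative_at_alt u_def by blast
  have lin: "linear U" using ud has_derivative_linear by blast
  show ?thesis
  proof (intro exI[of _ "d/2"] conjI allI impI)
    show "d/2 > 0" using d by simp
    fix h :: real assume h: "\<bar>h\<bar> < d/2"
    define \<phi> where "\<phi> s = g (p + h *\<^sub>R ev j + s *\<^sub>R ev i) - g (p + s *\<^sub>R ev i)" for s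
    define \<phi>' where "\<phi>' s = u (p + h *\<^sub>R ev j + s *\<^sub>R ev i) - u (p + s *\<^sub>R ev i)" for s
    have der: "(\<phi> has_vector_derivative \<phi>' s) (at s within S)" for s S
      unfolding \<phi>_def \<phi>'_def u_def
      by (intro has_vector_derivative_diff slice_deriv gd)
    have bnd: "norm (\<phi>' s - of_real h * U (ev j)) \<le> 3 * \<epsilon> * \<bar>h\<bar>" if s: "\<bar>s\<bar> \<le> \<bar>h\<bar>" for s
    proof -
      let ?y1 = "p + h *\<^sub>R ev j + s *\<^sub>R ev i" and ?y2 = "p + s *\<^sub>R ev i"
      have n1: "norm (?y1 - p) \<le> 2*\<bar>h\<bar>"
      proof -
        have "norm (?y1 - p) = norm (h *\<^sub>R ev j + s *\<^sub>R ev i)" by (simp add: algebra_simps)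
        also have "\<dots> \<le> norm (h *\<^sub>R ev j) + norm (s *\<^sub>R ev i)" by (rule norm_triangle_ineq)
        also have "\<dots> = \<bar>h\<bar> + \<bar>s\<bar>" by simp
        finally show ?thesis using s by simp
      qed
      have n2: "norm (?y2 - p) \<le> \<bar>h\<bar>" using s by simp
      have a1: "norm (u ?y1 - u p - U (?y1 - p)) \<le> \<epsilon> * (2*\<bar>h\<bar>)"
      proof -
        have "norm (u ?y1 - u p - U (?y1 - p)) \<le> \<epsilon> * norm (?y1 - p)"
          using d(2)[rule_format, of ?y1] n1 h by linarith
        also have "\<dots> \<le> \<epsilon> * (2*\<bar>h\<bar>)" using n1 e by (intro mult_left_mono) auto
        finally show ?thesis .
      qed
      have a2: "norm (u ?y2 - u p - U (?y2 - p)) \<le> \<epsilon> * \<bar>h\<bar>"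
      proof -
        have "norm (u ?y2 - u p - U (?y2 - p)) \<le> \<epsilon> * norm (?y2 - p)"
          using d(2)[rule_format, of ?y2] n2 h by linarith
        also have "\<dots> \<le> \<epsilon> * \<bar>h\<bar>" using n2 e by (intro mult_left_mono) auto
        finally show ?thesis .
      qed
      have e1: "?y1 - p = h *\<^sub>R ev j + s *\<^sub>R ev i" by (simp add: algebra_simps)
      have e2: "?y2 - p = s *\<^sub>R ev i" by simp
      have lu1: "U (?y1 - p) = of_real h * U (ev j) + of_real s * U (ev i)"
        unfolding e1 linear_add[OF lin] linear_scale[OF lin] scaleR_conv_of_real ..
      have lu2: "U (?y2 - p) = of_real s * U (ev i)"
        unfolding e2 linear_scale[OF lin] scaleR_conv_of_real ..
      have "\<phi>' s - of_real h * U (ev j) = (u ?y1 - u p - U (?y1 - p)) - (u ?y2 - u p - U (?y2 - p))"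
        unfolding \<phi>'_def lu1 lu2 by (simp add: algebra_simps)
      also have "norm \<dots> \<le> \<epsilon> * (2*\<bar>h\<bar>) + \<epsilon> * \<bar>h\<bar>"
      proof -
        have "norm ((u ?y1 - u p - U (?y1 - p)) - (u ?y2 - u p - U (?y2 - p))) \<le> norm (u ?y1 - u p - U (?y1 - p)) + norm (u ?y2 - u p - U (?y2 - p))"
          by (rule norm_triangle_ineq4)
        then show ?thesis using a1 a2 by linarith
      qed
      finally show ?thesis by (simp add: algebra_simps)
    qed
    have seg: "\<bar>x\<bar> \<le> \<bar>h\<bar>" if "x \<in> closed_segment 0 h" for x
      using that by (auto simp: closed_segment_eq_real_ivl split: if_splits)
    have "norm (\<phi> h - \<phi> 0 - (h - 0) *\<^sub>R \<phi>' 0) \<le> norm (h - 0) * (6*\<epsilon>*\<bar>h\<bar>)"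
    proof (rule vector_differentiable_bound_linearization[where S="closed_segment 0 h"])
      show "(\<phi> has_vector_derivative \<phi>' x) (at x within closed_segment 0 h)" for x by (rule der)
      show "closed_segment 0 h \<subseteq> closed_segment 0 h" by simp
      show "0 \<in> closed_segment 0 (h::real)" by simp
      show "norm (\<phi>' x - \<phi>' 0) \<le> 6*\<epsilon>*\<bar>h\<bar>" if "x \<in> closed_segment 0 h" for x
      proof -
        have "norm (\<phi>' x - \<phi>' 0) \<le> norm (\<phi>' x - of_real h * U (ev j)) + norm (\<phi>' 0 - of_real h * U (ev j))"
          using norm_triangle_ineq4[of "\<phi>' x - of_real h * U (ev j)" "\<phi>' 0 - of_real h * U (ev j)"] by simp
        also have "\<dots> \<le> 3 * \<epsilon> * \<bar>h\<bar> + 3 * \<epsilon> * \<bar>h\<bar>"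
          using bnd[OF seg[OF that]] bnd[of 0] by (intro add_mono) auto
        finally show ?thesis by simp
      qed
    qed
    then have A: "norm (\<phi> h - \<phi> 0 - of_real h * \<phi>' 0) \<le> 6*\<epsilon>*(h*h)"
      by (simp add: scaleR_conv_of_real abs_mult_self_eq algebra_simps)
    have B: "norm (of_real h * \<phi>' 0 - of_real (h*h) * U (ev j)) \<le> 3*\<epsilon>*(h*h)"
    proof -
      have "of_real h * \<phi>' 0 - of_real (h*h) * U (ev j) = of_real h * (\<phi>' 0 - of_real h * U (ev j))"
        by (simp add: algebra_simps)
      also have "norm \<dots> = \<bar>h\<bar> * norm (\<phi>' 0 - of_real h * U (ev j))" by (simp add: norm_mult)
      also have "\<dots> \<le> \<bar>h\<bar> * (3 * \<epsilon> * \<bar>h\<bar>)" using bnd[of 0] by (intro mult_left_mono) auto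
      finally show ?thesis by (simp add: abs_mult_self_eq algebra_simps)
    qed
    have "norm (\<phi> h - \<phi> 0 - of_real (h*h) * U (ev j)) \<le> 6*\<epsilon>*(h*h) + 3*\<epsilon>*(h*h)"
      using norm_triangle_le[OF add_mono[OF A B]] by (simp add: algebra_simps)
    moreover have "\<phi> h - \<phi> 0 = g (p + h *\<^sub>R ev j + h *\<^sub>R ev i) - g (p + h *\<^sub>R ev i) - g (p + h *\<^sub>R ev j) + g p"
      unfolding \<phi>_def by simp
    ultimately show "norm (g (p + h *\<^sub>R ev j + h *\<^sub>R ev i) - g (p + h *\<^sub>R ev i) - g (p + h *\<^sub>R ev j) + g p
           - of_real (h*h) * U (ev j)) \<le> 9 * \<epsilon> * (h*h)" by (simp add: algebra_simps)
  qed
qed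

lemma schwarz:
  fixes g :: "R3 \<Rightarrow> complex"
  assumes gd: "\<forall>y. g differentiable (at y)"
    and ud: "pd i g differentiable (at p)"
    and vd: "pd j g differentiable (at p)"
  shows "pd j (pd i g) p = pd i (pd j g) p"
proof -
  obtain U where U: "(pd i g has_derivative U) (at p)" using ud differentiable_def by blast
  obtain V where V: "(pd j g has_derivative V) (at p)" using vd differentiable_def by blast
  have bound: "norm (U (ev j) - V (ev i)) \<le> 18 * \<epsilon>" if e: "\<epsilon> > 0" for \<epsilon>
  proof -
    obtain d1 where d1: "d1 > 0" "\<forall>h. \<bar>h\<bar> < d1 \<longrightarrow>
     norm (g (p + h *\<^sub>R ev j + h *\<^sub>R ev i) - g (p + h *\<^sub>R ev i) - g (p + h *\<^sub>R ev j) + g p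
           - of_real (h*h) * U (ev j)) \<le> 9 * \<epsilon> * (h*h)"
      using delta_approx[OF gd U e, of j] by blast
    obtain d2 where d2: "d2 > 0" "\<forall>h. \<bar>h\<bar> < d2 \<longrightarrow>
     norm (g (p + h *\<^sub>R ev i + h *\<^sub>R ev j) - g (p + h *\<^sub>R ev j) - g (p + h *\<^sub>R ev i) + g p
           - of_real (h*h) * V (ev i)) \<le> 9 * \<epsilon> * (h*h)"
      using delta_approx[OF gd V e, of i] by blast
    define h where "h = min d1 d2 / 2"
    have hpos: "h > 0" and h1: "\<bar>h\<bar> < d1" and h2: "\<bar>h\<bar> < d2"
      using d1 d2 by (auto simp: h_def)
    define A where "A = g (p + h *\<^sub>R ev j + h *\<^sub>R ev i) - g (p + h *\<^sub>R ev i) - g (p + h *\<^sub>R ev j) + g p"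
    have AA: "g (p + h *\<^sub>R ev i + h *\<^sub>R ev j) - g (p + h *\<^sub>R ev j) - g (p + h *\<^sub>R ev i) + g p = A"
      unfolding A_def by (simp add: algebra_simps)
    have n1: "norm (A - of_real (h*h) * U (ev j)) \<le> 9 * \<epsilon> * (h*h)"
      using d1(2)[rule_format, OF h1] unfolding A_def .
    have n2: "norm (A - of_real (h*h) * V (ev i)) \<le> 9 * \<epsilon> * (h*h)"
      using d2(2)[rule_format, OF h2] unfolding AA .
    have "norm (of_real (h*h) * (U (ev j) - V (ev i))) \<le> norm (A - of_real (h*h) * U (ev j)) + norm (A - of_real (h*h) * V (ev i))"
      using norm_triangle_ineq4[of "A - of_real (h*h) * V (ev i)" "A - of_real (h*h) * U (ev j)"]
      by (simp add: algebra_simps norm_minus_commute)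
    also have "\<dots> \<le> 18 * \<epsilon> * (h*h)" using n1 n2 by linarith
    finally have "norm (of_real (h*h) * (U (ev j) - V (ev i))) \<le> (h*h) * (18 * \<epsilon>)"
      by (simp add: algebra_simps)
    moreover have "norm (of_real (h*h) * (U (ev j) - V (ev i))) = (h*h) * norm (U (ev j) - V (ev i))"
      by (simp add: norm_mult abs_mult_self_eq)
    ultimately have "(h*h) * norm (U (ev j) - V (ev i)) \<le> (h*h) * (18 * \<epsilon>)"
      by simp
    then show ?thesis using hpos by (simp add: mult_le_cancel_left)
  qed
  have "norm (U (ev j) - V (ev i)) = 0"
  proof (rule ccontr)
    assume "norm (U (ev j) - V (ev i)) \<noteq> 0"
    then have pos: "norm (U (ev j) - V (ev i)) > 0" by simp
    have "norm (U (ev j) - V (ev i)) \<le> 18 * (norm (U (ev j) - V (ev i)) / 36)"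
      using bound[of "norm (U (ev j) - V (ev i)) / 36"] pos by simp
    then show False using pos by simp
  qed
  then show ?thesis using pd_eq[OF U, of j] pd_eq[OF V, of i] by simp
qed

definition cf :: "complex \<Rightarrow> real \<Rightarrow> real \<Rightarrow> R3 \<Rightarrow> complex" where
  "cf \<alpha> b1 b2 x = \<alpha> + of_real (b1 * fst x + b2 * fst (snd x))"

definition dcf :: "real \<Rightarrow> real \<Rightarrow> nat \<Rightarrow> real" where
  "dcf b1 b2 i = (if i = 0 then b1 else if i = 1 then b2 else 0)"

lemma cf_deriv: "(cf \<alpha> b1 b2 has_derivative (\<lambda>y. of_real (b1 * fst y + b2 * fst (snd y)))) (at p)"
  unfolding cf_def by (auto intro!: derivative_eq_intros)

lemma cf_const [simp]: "cf a 0 0 x = a"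
  by (simp add: cf_def)

lemma pd_add:
  assumes "u differentiable (at p)" "v differentiable (at p)"
  shows "pd i (\<lambda>x. u x + v x) p = pd i u p + pd i v p"
proof -
  obtain U where U: "(u has_derivative U) (at p)" using assms(1) differentiable_def by blast
  obtain V where V: "(v has_derivative V) (at p)" using assms(2) differentiable_def by blast
  have "((\<lambda>x. u x + v x) has_derivative (\<lambda>y. U y + V y)) (at p)"
    using U V by (rule has_derivative_add)
  then show ?thesis using pd_eq[OF U] pd_eq[OF V] pd_eq by metis
qed

lemma pd_cmul:
  assumes "g differentiable (at p)"
  shows "pd i (\<lambda>x. cf \<alpha> b1 b2 x * g x) p = cf \<alpha> b1 b2 p * pd i g p + of_real (dcf b1 b2 i) * g p"
proof -
  obtain G where G: "(g has_derivative G) (at p)" using assms differentiable_def by blast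
  have "((\<lambda>x. cf \<alpha> b1 b2 x * g x) has_derivative
     (\<lambda>y. cf \<alpha> b1 b2 p * G y + of_real (b1 * fst y + b2 * fst (snd y)) * g p)) (at p)"
    using has_derivative_mult[OF cf_deriv G] .
  then have "pd i (\<lambda>x. cf \<alpha> b1 b2 x * g x) p = cf \<alpha> b1 b2 p * G (ev i) + of_real (b1 * fst (ev i) + b2 * fst (snd (ev i))) * g p"
    by (rule pd_eq)
  moreover have "b1 * fst (ev i) + b2 * fst (snd (ev i)) = dcf b1 b2 i"
    by (simp add: ev_def dcf_def)
  ultimately show ?thesis using pd_eq[OF G] by simp
qed

lemma pd_zero: "pd i (\<lambda>x. 0) p = 0"
  using pd_eq[OF has_derivative_const[of 0 "at p"]] by simp

lemma smooth_D: "smooth3 g \<Longrightarrow> set is \<subseteq> {0,1,2} \<Longrightarrow> foldr pd is g differentiable (at x)"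
  unfolding smooth3_def by blast

lemma smooth_diff: "smooth3 g \<Longrightarrow> g differentiable (at x)"
  using smooth_D[of g "[]"] by simp

lemma smooth_pd: "smooth3 g \<Longrightarrow> i \<le> 2 \<Longrightarrow> smooth3 (pd i g)"
  unfolding smooth3_def
proof (intro allI impI)
  fix "is" x assume g: "\<forall>is. set is \<subseteq> {0, 1, 2} \<longrightarrow> (\<forall>x. foldr pd is g differentiable at x)"
    and i: "i \<le> 2" and s: "set is \<subseteq> {0::nat, 1, 2}"
  have "set (is @ [i]) \<subseteq> {0,1,2}" using s i by auto
  then have "foldr pd (is @ [i]) g differentiable (at x)" using g by blast
  then show "foldr pd is (pd i g) differentiable (at x)" by simp
qed

lemma foldr_pd_add:
  assumes "\<forall>t x. foldr pd (drop t is) u differentiable (at x)"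
    and "\<forall>t x. foldr pd (drop t is) v differentiable (at x)"
  shows "foldr pd is (\<lambda>x. u x + v x) = (\<lambda>x. foldr pd is u x + foldr pd is v x)"
  using assms
proof (induction "is")
  case Nil
  then show ?case by simp
next
  case (Cons i "is")
  have h1: "\<forall>t x. foldr pd (drop t is) u differentiable (at x)"
  proof (intro allI)
    fix t x show "foldr pd (drop t is) u differentiable (at x)" using Cons.prems(1)[rule_format, of "Suc t" x] by simp
  qed
  have h2: "\<forall>t x. foldr pd (drop t is) v differentiable (at x)"
  proof (intro allI)
    fix t x show "foldr pd (drop t is) v differentiable (at x)" using Cons.prems(2)[rule_format, of "Suc t" x] by simp
  qed
  have d1: "foldr pd is u differentiable (at x)" for x using h1[rule_format, of 0] by simp
  have d2: "foldr pd is v differentiable (at x)" for x using h2[rule_format, of 0] by simp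
  show ?case
    using Cons.IH[OF h1 h2] pd_add[OF d1 d2] by auto
qed

lemma smooth_add:
  assumes u: "smooth3 u" and v: "smooth3 v"
  shows "smooth3 (\<lambda>x. u x + v x)"
proof -
  have "foldr pd is (\<lambda>x. u x + v x) differentiable (at x)" if s: "set is \<subseteq> {0::nat, 1, 2}" for "is" x
  proof -
    have ds: "set (drop t is) \<subseteq> {0,1,2}" for t using set_drop_subset[of t "is"] s by (rule subset_trans)
    have hu: "\<forall>t x. foldr pd (drop t is) u differentiable (at x)"
      using smooth_D[OF u ds] by blast
    have hv: "\<forall>t x. foldr pd (drop t is) v differentiable (at x)"
      using smooth_D[OF v ds] by blast
    have d1: "foldr pd is u differentiable (at x)" by (rule smooth_D[OF u s])
    have d2: "foldr pd is v differentiable (at x)" by (rule smooth_D[OF v s])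
    have "foldr pd is (\<lambda>x. u x + v x) = (\<lambda>x. foldr pd is u x + foldr pd is v x)"
      by (rule foldr_pd_add[OF hu hv])
    then show ?thesis using differentiable_add[OF d1 d2] by simp
  qed
  then show ?thesis unfolding smooth3_def by blast
qed

lemma smooth_cmul_aux:
  "\<forall>is. length is = n \<longrightarrow> set is \<subseteq> {0,1,2} \<longrightarrow> (\<forall>\<alpha> b1 b2 g. smooth3 g \<longrightarrow>
      (\<forall>x. foldr pd is (\<lambda>x. cf \<alpha> b1 b2 x * g x) differentiable (at x)))"
proof (induction n rule: less_induct)
  case (less n)
  show ?case
  proof (intro allI impI)
    fix "is" :: "nat list" and \<alpha> b1 b2 g x
    assume len: "length is = n" and s: "set is \<subseteq> {0,1,2}" and g: "smooth3 g"
    show "foldr pd is (\<lambda>x. cf \<alpha> b1 b2 x * g x) differentiable (at x)"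
    proof (cases "is = []")
      case True
      have "cf \<alpha> b1 b2 differentiable (at x)" unfolding differentiable_def by (rule exI, rule cf_deriv)
      then show ?thesis using True smooth_diff[OF g] by (simp add: differentiable_mult)
    next
      case False
      define i where "i = last is"
      define js where "js = butlast is"
      have isd: "is = js @ [i]" using False by (simp add: i_def js_def)
      have i2: "i \<le> 2" using s isd by auto
      have sjs: "set js \<subseteq> {0,1,2}" using s isd by auto
      have ljs: "length js < n" using len isd by simp
      define c where "c = complex_of_real (dcf b1 b2 i)"
      have pdF: "pd i (\<lambda>x. cf \<alpha> b1 b2 x * g x) = (\<lambda>x. cf \<alpha> b1 b2 x * pd i g x + cf c 0 0 x * g x)"
        using pd_cmul[OF smooth_diff[OF g]] by (auto simp: c_def)
      have gp: "smooth3 (pd i g)" using smooth_pd[OF g i2] .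
      have IH: "\<And>ks \<alpha> b1 b2 h x. length ks < n \<Longrightarrow> set ks \<subseteq> {0,1,2} \<Longrightarrow> smooth3 h \<Longrightarrow>
          foldr pd ks (\<lambda>x. cf \<alpha> b1 b2 x * h x) differentiable (at x)"
        using less.IH by blast
      have dl: "length (drop t js) < n" "set (drop t js) \<subseteq> {0,1,2}" for t
        using ljs apply simp
        using set_drop_subset[of t js] sjs by (rule subset_trans)
      have hu: "\<forall>t x. foldr pd (drop t js) (\<lambda>x. cf \<alpha> b1 b2 x * pd i g x) differentiable (at x)"
        using IH[OF dl gp] by blast
      have hv: "\<forall>t x. foldr pd (drop t js) (\<lambda>x. cf c 0 0 x * g x) differentiable (at x)"
        using IH[OF dl g] by blast
      have "foldr pd is (\<lambda>x. cf \<alpha> b1 b2 x * g x) = foldr pd js (\<lambda>x. cf \<alpha> b1 b2 x * pd i g x + cf c 0 0 x * g x)"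
        using isd pdF by simp
      also have "\<dots> = (\<lambda>x. foldr pd js (\<lambda>x. cf \<alpha> b1 b2 x * pd i g x) x + foldr pd js (\<lambda>x. cf c 0 0 x * g x) x)"
        by (rule foldr_pd_add[OF hu hv])
      finally have eq: "foldr pd is (\<lambda>x. cf \<alpha> b1 b2 x * g x) = (\<lambda>x. foldr pd js (\<lambda>x. cf \<alpha> b1 b2 x * pd i g x) x + foldr pd js (\<lambda>x. cf c 0 0 x * g x) x)" .
      show ?thesis unfolding eq by (rule differentiable_add[OF IH[OF ljs sjs gp] IH[OF ljs sjs g]])
    qed
  qed
qed

lemma smooth_cmul: "smooth3 g \<Longrightarrow> smooth3 (\<lambda>x. cf \<alpha> b1 b2 x * g x)"
  using smooth_cmul_aux unfolding smooth3_def by blast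

lemma smooth_scale: "smooth3 g \<Longrightarrow> smooth3 (\<lambda>x. a * g x)"
  using smooth_cmul[of g a 0 0] by simp

lemma smooth_zero: "smooth3 (\<lambda>x. 0)"
proof -
  have "foldr pd is (\<lambda>x. 0) = (\<lambda>x. 0)" for "is"
    by (induction "is") (auto simp: pd_zero)
  then show ?thesis unfolding smooth3_def by simp
qed

lemma D1_eq: "D1 = (\<lambda>g x. pd 0 g x + cf 0 0 (1/2) x * pd 2 g x)"
  apply (rule ext)+
  subgoal for g x by (cases x) (simp add: D1_def cf_def)
  done

lemma D2_eq: "D2 = (\<lambda>g x. pd 1 g x + cf 0 (-1/2) 0 x * pd 2 g x)"
  apply (rule ext)+
  subgoal for g x by (cases x) (simp add: D2_def cf_def)
  done

lemma D3_eq: "D3 = pd 2"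
  by (rule ext) (simp add: D3_def)

definition linop :: "((R3 \<Rightarrow> complex) \<Rightarrow> (R3 \<Rightarrow> complex)) \<Rightarrow> bool" where
  "linop T \<longleftrightarrow> (\<forall>u. smooth3 u \<longrightarrow> smooth3 (T u)) \<and>
     (\<forall>u v. smooth3 u \<longrightarrow> smooth3 v \<longrightarrow> T (\<lambda>x. u x + v x) = (\<lambda>x. T u x + T v x)) \<and>
     (\<forall>a u. smooth3 u \<longrightarrow> T (\<lambda>x. a * u x) = (\<lambda>x. a * T u x))"

lemma linopD:
  assumes "linop T"
  shows "smooth3 u \<Longrightarrow> smooth3 (T u)"
    and "smooth3 u \<Longrightarrow> smooth3 v \<Longrightarrow> T (\<lambda>x. u x + v x) = (\<lambda>x. T u x + T v x)"
    and "smooth3 u \<Longrightarrow> T (\<lambda>x. a * u x) = (\<lambda>x. a * T u x)"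
  using assms unfolding linop_def by blast+

lemma linop_pd: "i \<le> 2 \<Longrightarrow> linop (pd i)"
  unfolding linop_def
proof (intro conjI allI impI)
  fix u v assume i: "i \<le> 2" and u: "smooth3 u"
  show "smooth3 (pd i u)" by (rule smooth_pd[OF u i])
  fix a
  show "pd i (\<lambda>x. a * u x) = (\<lambda>x. a * pd i u x)"
  proof (rule ext)
    fix p show "pd i (\<lambda>x. a * u x) p = a * pd i u p"
      using pd_cmul[OF smooth_diff[OF u], of i a 0 0] by (simp add: dcf_def)
  qed
next
  fix u v assume i: "i \<le> 2" and u: "smooth3 u" and v: "smooth3 v"
  show "pd i (\<lambda>x. u x + v x) = (\<lambda>x. pd i u x + pd i v x)"
    by (rule ext) (rule pd_add[OF smooth_diff[OF u] smooth_diff[OF v]])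
qed

lemma linop_comb:
  assumes S: "linop S" and T: "linop T"
  shows "linop (\<lambda>u x. S u x + cf \<alpha> b1 b2 x * T u x)"
  unfolding linop_def
proof (intro conjI allI impI)
  fix u assume u: "smooth3 u"
  show "smooth3 (\<lambda>x. S u x + cf \<alpha> b1 b2 x * T u x)"
    by (intro smooth_add smooth_cmul linopD(1)[OF S u] linopD(1)[OF T u])
  fix a
  show "(\<lambda>x. S (\<lambda>x. a * u x) x + cf \<alpha> b1 b2 x * T (\<lambda>x. a * u x) x) =
        (\<lambda>x. a * (S u x + cf \<alpha> b1 b2 x * T u x))"
    using linopD(3)[OF S u] linopD(3)[OF T u] by (simp add: algebra_simps)
next
  fix u v assume u: "smooth3 u" and v: "smooth3 v"
  show "(\<lambda>x. S (\<lambda>x. u x + v x) x + cf \<alpha> b1 b2 x * T (\<lambda>x. u x + v x) x) =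
        (\<lambda>x. (S u x + cf \<alpha> b1 b2 x * T u x) + (S v x + cf \<alpha> b1 b2 x * T v x))"
    using linopD(2)[OF S u v] linopD(2)[OF T u v] by (simp add: algebra_simps)
qed

lemma linop_D1: "linop D1"
  unfolding D1_eq by (intro linop_comb linop_pd) auto

lemma linop_D2: "linop D2"
  unfolding D2_eq by (intro linop_comb linop_pd) auto

lemma linop_D3: "linop D3"
  unfolding D3_eq by (intro linop_pd) auto

lemma linop_comp: "linop S \<Longrightarrow> linop T \<Longrightarrow> linop (\<lambda>u. S (T u))"
  unfolding linop_def by (auto simp del: all_simps)

lemma linop_id: "linop (\<lambda>u. u)"
  unfolding linop_def by simp

lemma linop_pow: "linop T \<Longrightarrow> linop (T ^^ n)"
proof (induction n)
  case 0
  then show ?case using linop_id by (simp add: id_def)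
next
  case (Suc n)
  have "linop (\<lambda>u. T ((T ^^ n) u))" by (rule linop_comp[OF Suc.prems Suc.IH[OF Suc.prems]])
  then show ?case by (simp add: o_def)
qed

lemma smooth_sum:
  assumes "finite A" "\<forall>j\<in>A. smooth3 (u j)"
  shows "smooth3 (\<lambda>x. \<Sum>j\<in>A. c j * u j x)"
  using assms
proof (induction A rule: finite_induct)
  case empty
  then show ?case using smooth_zero by simp
next
  case (insert j A)
  have "smooth3 (\<lambda>x. c j * u j x + (\<Sum>j\<in>A. c j * u j x))"
    using insert by (intro smooth_add smooth_scale) auto
  then show ?case using insert by simp
qed

lemma linop_zero: "linop T \<Longrightarrow> T (\<lambda>x. 0) = (\<lambda>x. 0)"
  using linopD(3)[of T "\<lambda>x. 0" 0] smooth_zero by simp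

lemma linop_sum:
  assumes T: "linop T" and "finite A" "\<forall>j\<in>A. smooth3 (u j)"
  shows "T (\<lambda>x. \<Sum>j\<in>A. c j * u j x) = (\<lambda>x. \<Sum>j\<in>A. c j * T (u j) x)"
  using assms(2,3)
proof (induction A rule: finite_induct)
  case empty
  then show ?case using linop_zero[OF T] by simp
next
  case (insert j A)
  have s1: "smooth3 (\<lambda>x. c j * u j x)" using insert by (intro smooth_scale) auto
  have s2: "smooth3 (\<lambda>x. \<Sum>j\<in>A. c j * u j x)" using insert by (intro smooth_sum) auto
  have "T (\<lambda>x. \<Sum>j\<in>insert j A. c j * u j x) = T (\<lambda>x. c j * u j x + (\<Sum>j\<in>A. c j * u j x))"
    using insert by simp
  also have "\<dots> = (\<lambda>x. T (\<lambda>x. c j * u j x) x + T (\<lambda>x. \<Sum>j\<in>A. c j * u j x) x)"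
    by (rule linopD(2)[OF T s1 s2])
  also have "\<dots> = (\<lambda>x. c j * T (u j) x + (\<Sum>j\<in>A. c j * T (u j) x))"
    using linopD(3)[OF T, of "u j" "c j"] insert by simp
  finally show ?case using insert by simp
qed

lemma sm_pd_diff: "smooth3 g \<Longrightarrow> i \<le> 2 \<Longrightarrow> pd i g differentiable (at x)"
  by (rule smooth_diff[OF smooth_pd])

lemma pd_comb:
  assumes g: "smooth3 g" and j: "j \<le> 2" and k: "k \<le> 2"
  shows "pd i (\<lambda>x. pd j g x + cf \<alpha> b1 b2 x * pd k g x) p =
     pd i (pd j g) p + cf \<alpha> b1 b2 p * pd i (pd k g) p + of_real (dcf b1 b2 i) * pd k g p"
proof -
  have d1: "pd j g differentiable (at p)" by (rule sm_pd_diff[OF g j])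
  have d2: "(\<lambda>x. cf \<alpha> b1 b2 x * pd k g x) differentiable (at p)"
    by (rule smooth_diff[OF smooth_cmul[OF smooth_pd[OF g k]]])
  show ?thesis
    using pd_add[OF d1 d2, of i] pd_cmul[OF sm_pd_diff[OF g k], of i \<alpha> b1 b2] by simp
qed

lemma pd_D1: "smooth3 g \<Longrightarrow> pd i (D1 g) p =
     pd i (pd 0 g) p + cf 0 0 (1/2) p * pd i (pd 2 g) p + of_real (dcf 0 (1/2) i) * pd 2 g p"
  unfolding D1_eq by (rule pd_comb) auto

lemma pd_D2: "smooth3 g \<Longrightarrow> pd i (D2 g) p =
     pd i (pd 1 g) p + cf 0 (-1/2) 0 p * pd i (pd 2 g) p + of_real (dcf (-1/2) 0 i) * pd 2 g p"
  unfolding D2_eq by (rule pd_comb) auto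

lemma sw:
  assumes g: "smooth3 g" and i: "i \<le> 2" and j: "j \<le> 2"
  shows "pd j (pd i g) p = pd i (pd j g) p"
  by (rule schwarz[OF _ sm_pd_diff[OF g i] sm_pd_diff[OF g j]]) (simp add: smooth_diff[OF g])

lemma D1_ap: "D1 g p = pd 0 g p + cf 0 0 (1/2) p * pd 2 g p"
  by (simp add: D1_eq)

lemma D2_ap: "D2 g p = pd 1 g p + cf 0 (-1/2) 0 p * pd 2 g p"
  by (simp add: D2_eq)

lemma comm12:
  assumes g: "smooth3 g"
  shows "D2 (D1 g) = (\<lambda>x. D1 (D2 g) x + D3 g x)"
proof (rule ext)
  fix p
  have s01: "pd 1 (pd 0 g) p = pd 0 (pd 1 g) p" by (rule sw[OF g]) auto
  have s02: "pd 2 (pd 0 g) p = pd 0 (pd 2 g) p" by (rule sw[OF g]) auto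
  have s12: "pd 2 (pd 1 g) p = pd 1 (pd 2 g) p" by (rule sw[OF g]) auto
  have "D2 (D1 g) p = pd 1 (D1 g) p + cf 0 (-1/2) 0 p * pd 2 (D1 g) p" by (rule D2_ap)
  also have "\<dots> = (pd 1 (pd 0 g) p + cf 0 0 (1/2) p * pd 1 (pd 2 g) p + of_real (dcf 0 (1/2) 1) * pd 2 g p)
     + cf 0 (-1/2) 0 p * (pd 2 (pd 0 g) p + cf 0 0 (1/2) p * pd 2 (pd 2 g) p + of_real (dcf 0 (1/2) 2) * pd 2 g p)"
    by (simp only: pd_D1[OF g])
  finally have L: "D2 (D1 g) p = \<dots>" .
  have "D1 (D2 g) p = pd 0 (D2 g) p + cf 0 0 (1/2) p * pd 2 (D2 g) p" by (rule D1_ap)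
  also have "\<dots> = (pd 0 (pd 1 g) p + cf 0 (-1/2) 0 p * pd 0 (pd 2 g) p + of_real (dcf (-1/2) 0 0) * pd 2 g p)
     + cf 0 0 (1/2) p * (pd 2 (pd 1 g) p + cf 0 (-1/2) 0 p * pd 2 (pd 2 g) p + of_real (dcf (-1/2) 0 2) * pd 2 g p)"
    by (simp only: pd_D2[OF g])
  finally have R: "D1 (D2 g) p = \<dots>" .
  show "D2 (D1 g) p = D1 (D2 g) p + D3 g p"
    unfolding L R D3_eq s01 s02 s12 by (simp add: dcf_def algebra_simps)
qed

lemma comm13:
  assumes g: "smooth3 g"
  shows "D3 (D1 g) = D1 (D3 g)"
proof (rule ext)
  fix p
  have s02: "pd 2 (pd 0 g) p = pd 0 (pd 2 g) p" by (rule sw[OF g]) auto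
  show "D3 (D1 g) p = D1 (D3 g) p"
    unfolding D3_eq D1_ap pd_D1[OF g] s02 by (simp add: dcf_def)
qed

lemma comm23:
  assumes g: "smooth3 g"
  shows "D3 (D2 g) = D2 (D3 g)"
proof (rule ext)
  fix p
  have s12: "pd 2 (pd 1 g) p = pd 1 (pd 2 g) p" by (rule sw[OF g]) auto
  show "D3 (D2 g) p = D2 (D3 g) p"
    unfolding D3_eq D2_ap pd_D2[OF g] s12 by (simp add: dcf_def)
qed

lemma sm1: "smooth3 g \<Longrightarrow> smooth3 (D1 g)" by (rule linopD(1)[OF linop_D1])
lemma sm2: "smooth3 g \<Longrightarrow> smooth3 (D2 g)" by (rule linopD(1)[OF linop_D2])
lemma sm3: "smooth3 g \<Longrightarrow> smooth3 (D3 g)" by (rule linopD(1)[OF linop_D3])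
lemma smp1: "smooth3 g \<Longrightarrow> smooth3 ((D1^^n) g)" by (rule linopD(1)[OF linop_pow[OF linop_D1]])
lemma smp2: "smooth3 g \<Longrightarrow> smooth3 ((D2^^n) g)" by (rule linopD(1)[OF linop_pow[OF linop_D2]])
lemma smp3: "smooth3 g \<Longrightarrow> smooth3 ((D3^^n) g)" by (rule linopD(1)[OF linop_pow[OF linop_D3]])

definition E :: "nat \<Rightarrow> nat \<Rightarrow> nat \<Rightarrow> (R3 \<Rightarrow> complex) \<Rightarrow> (R3 \<Rightarrow> complex)" where
  "E a b c h = (D1^^a) ((D2^^b) ((D3^^c) h))"

lemma smE: "smooth3 h \<Longrightarrow> smooth3 (E a b c h)"
  unfolding E_def by (intro smp1 smp2 smp3)

lemma p31: "smooth3 h \<Longrightarrow> D3 ((D1^^a) h) = (D1^^a) (D3 h)"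
proof (induction a)
  case 0 then show ?case by simp
next
  case (Suc a)
  have "D3 ((D1^^Suc a) h) = D3 (D1 ((D1^^a) h))" by simp
  also have "\<dots> = D1 (D3 ((D1^^a) h))" by (rule comm13[OF smp1[OF Suc.prems]])
  also have "\<dots> = (D1^^Suc a) (D3 h)" using Suc by simp
  finally show ?case .
qed

lemma p32: "smooth3 h \<Longrightarrow> D3 ((D2^^b) h) = (D2^^b) (D3 h)"
proof (induction b)
  case 0 then show ?case by simp
next
  case (Suc b)
  have "D3 ((D2^^Suc b) h) = D3 (D2 ((D2^^b) h))" by simp
  also have "\<dots> = D2 (D3 ((D2^^b) h))" by (rule comm23[OF smp2[OF Suc.prems]])
  also have "\<dots> = (D2^^Suc b) (D3 h)" using Suc by simp
  finally show ?case .
qed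

lemma D1_pow_pred: "smooth3 X \<Longrightarrow> of_nat a * D1 ((D1^^(a-1)) X) x = of_nat a * (D1^^a) X x"
  by (cases a) auto

lemma p21: "smooth3 h \<Longrightarrow> D2 ((D1^^a) h) = (\<lambda>x. (D1^^a) (D2 h) x + of_nat a * (D1^^(a-1)) (D3 h) x)"
proof (induction a)
  case 0 then show ?case by simp
next
  case (Suc a)
  have sh: "smooth3 ((D1^^a) h)" by (rule smp1[OF Suc.prems])
  have "D2 ((D1^^Suc a) h) = D2 (D1 ((D1^^a) h))" by simp
  also have "\<dots> = (\<lambda>x. D1 (D2 ((D1^^a) h)) x + D3 ((D1^^a) h) x)" by (rule comm12[OF sh])
  also have "\<dots> = (\<lambda>x. D1 (\<lambda>x. (D1^^a) (D2 h) x + of_nat a * (D1^^(a-1)) (D3 h) x) x + (D1^^a) (D3 h) x)"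
    using Suc.IH[OF Suc.prems] p31[OF Suc.prems] by simp
  also have "\<dots> = (\<lambda>x. (D1^^Suc a) (D2 h) x + of_nat (Suc a) * (D1^^(Suc a - 1)) (D3 h) x)"
  proof -
    have s1: "smooth3 ((D1^^a) (D2 h))" by (intro smp1 sm2 Suc.prems)
    have s2: "smooth3 ((D1^^(a-1)) (D3 h))" by (intro smp1 sm3 Suc.prems)
    have s2': "smooth3 (\<lambda>x. of_nat a * (D1^^(a-1)) (D3 h) x)" by (intro smooth_scale s2)
    have "D1 (\<lambda>x. (D1^^a) (D2 h) x + of_nat a * (D1^^(a-1)) (D3 h) x) =
       (\<lambda>x. D1 ((D1^^a) (D2 h)) x + D1 (\<lambda>x. of_nat a * (D1^^(a-1)) (D3 h) x) x)"
      by (rule linopD(2)[OF linop_D1 s1 s2'])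
    also have "\<dots> = (\<lambda>x. D1 ((D1^^a) (D2 h)) x + of_nat a * D1 ((D1^^(a-1)) (D3 h)) x)"
      using linopD(3)[OF linop_D1 s2] by simp
    also have "\<dots> = (\<lambda>x. (D1^^Suc a) (D2 h) x + of_nat a * (D1^^a) (D3 h) x)"
      by (simp only: D1_pow_pred[OF sm3[OF Suc.prems]] funpow.simps o_apply)
    finally show ?thesis by (simp add: algebra_simps)
  qed
  finally show ?case .
qed

lemma D1_E: "D1 (E a b c h) = E (Suc a) b c h"
  by (simp add: E_def)

lemma D1p_E: "(D1^^n) (E a b c h) = E (n + a) b c h"
  by (simp add: E_def funpow_add)

lemma D3_E: "smooth3 h \<Longrightarrow> D3 (E a b c h) = E a b (Suc c) h"
  unfolding E_def by (simp add: p31 p32 smp2 smp3)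

lemma D2_E: "smooth3 h \<Longrightarrow> D2 (E a b c h) = (\<lambda>x. E a (Suc b) c h x + of_nat a * E (a-1) b (Suc c) h x)"
  unfolding E_def by (simp add: p21 p32 smp2 smp3)

lemma absorb: "(a - i) * (a choose i) = Suc i * (a choose Suc i)"
  using binomial_absorb_comp[of a i] binomial_absorption[of i a] by simp

lemma kappa_rec: "fact (Suc i) * (a choose Suc i) * (Suc n choose Suc i) =
   fact (Suc i) * (a choose Suc i) * (n choose Suc i) + fact i * (a choose i) * (n choose i) * (a - i)"
proof -
  have "fact i * (a choose i) * (n choose i) * (a - i) = fact i * ((a - i) * (a choose i)) * (n choose i)"
    by (simp add: algebra_simps)
  also have "\<dots> = fact (Suc i) * (a choose Suc i) * (n choose i)"
    unfolding absorb by (simp add: algebra_simps)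
  finally show ?thesis by (simp add: algebra_simps)
qed

lemma D2p_E:
  assumes h: "smooth3 h"
  shows "(D2^^n) (E a b c h) = (\<lambda>x. \<Sum>i\<le>n. of_nat (fact i * (a choose i) * (n choose i)) * E (a-i) (b+n-i) (c+i) h x)"
proof (induction n)
  case 0
  then show ?case by simp
next
  case (Suc n)
  define \<kappa> where "\<kappa> m i = (of_nat (fact i * (a choose i) * (m choose i)) :: complex)" for m i
  define F where "F i = E (a-i) (b + Suc n - i) (c+i) h" for i
  have "(D2^^Suc n) (E a b c h) = D2 (\<lambda>x. \<Sum>i\<le>n. \<kappa> n i * E (a-i) (b+n-i) (c+i) h x)"
    using Suc.IH by (simp add: \<kappa>_def)
  also have "\<dots> = (\<lambda>x. \<Sum>i\<le>n. \<kappa> n i * D2 (E (a-i) (b+n-i) (c+i) h) x)"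
    by (rule linop_sum[OF linop_D2]) (auto intro: smE h)
  also have "\<dots> = (\<lambda>x. \<Sum>i\<le>n. \<kappa> n i * (F i x + of_nat (a - i) * F (Suc i) x))"
  proof (rule ext, rule sum.cong[OF refl])
    fix x i assume i: "i \<in> {..n}"
    have "D2 (E (a-i) (b+n-i) (c+i) h) x = E (a-i) (Suc (b+n-i)) (c+i) h x + of_nat (a-i) * E (a-i-1) (b+n-i) (Suc (c+i)) h x"
      using D2_E[OF h] by simp
    also have "\<dots> = F i x + of_nat (a - i) * F (Suc i) x"
      using i by (simp add: F_def Suc_diff_le)
    finally show "\<kappa> n i * D2 (E (a-i) (b+n-i) (c+i) h) x = \<kappa> n i * (F i x + of_nat (a - i) * F (Suc i) x)"
      by simp
  qed
  also have "\<dots> = (\<lambda>x. \<Sum>i\<le>Suc n. \<kappa> (Suc n) i * F i x)"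
  proof (rule ext)
    fix x
    have A: "(\<Sum>i\<le>n. \<kappa> n i * F i x) = \<kappa> n 0 * F 0 x + (\<Sum>i\<le>n. \<kappa> n (Suc i) * F (Suc i) x)"
    proof -
      have "(\<Sum>i\<le>n. \<kappa> n i * F i x) = (\<Sum>i\<le>Suc n. \<kappa> n i * F i x)"
        by (simp add: \<kappa>_def)
      also have "\<dots> = \<kappa> n 0 * F 0 x + (\<Sum>i\<le>n. \<kappa> n (Suc i) * F (Suc i) x)"
        by (rule sum.atMost_Suc_shift)
      finally show ?thesis .
    qed
    have B: "\<kappa> (Suc n) (Suc i) = \<kappa> n (Suc i) + \<kappa> n i * of_nat (a - i)" for i
      unfolding \<kappa>_def using kappa_rec[of i a n] by (metis of_nat_add of_nat_mult)
    have "(\<Sum>i\<le>n. \<kappa> n i * (F i x + of_nat (a - i) * F (Suc i) x)) =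
        (\<Sum>i\<le>n. \<kappa> n i * F i x) + (\<Sum>i\<le>n. \<kappa> n i * of_nat (a - i) * F (Suc i) x)"
      by (simp add: sum.distrib algebra_simps)
    also have "\<dots> = \<kappa> n 0 * F 0 x + (\<Sum>i\<le>n. \<kappa> (Suc n) (Suc i) * F (Suc i) x)"
      unfolding A B by (simp add: sum.distrib algebra_simps)
    also have "\<dots> = (\<Sum>i\<le>Suc n. \<kappa> (Suc n) i * F i x)"
    proof -
      have k0: "\<kappa> n 0 = \<kappa> (Suc n) 0" by (simp add: \<kappa>_def)
      show ?thesis by (simp only: sum.atMost_Suc_shift k0)
    qed
    finally show "(\<Sum>i\<le>n. \<kappa> n i * (F i x + of_nat (a - i) * F (Suc i) x)) = (\<Sum>i\<le>Suc n. \<kappa> (Suc n) i * F i x)" .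
  qed
  finally show ?case by (simp add: \<kappa>_def F_def)
qed

lemma Dv_simps [simp]: "Dv 0 = D1" "Dv (Suc 0) = D2" "Dv 2 = D3"
  by (simp_all add: Dv_def)

lemma linop_Dv: "linop (Dv i)"
  unfolding Dv_def using linop_D1 linop_D2 linop_D3 by auto

lemma word_op_Nil [simp]: "word_op [] h = h" by (simp add: word_op_def)
lemma word_op_Cons [simp]: "word_op (i # w) h = Dv i (word_op w h)" by (simp add: word_op_def)

lemma sm_word_op: "smooth3 h \<Longrightarrow> smooth3 (word_op w h)"
  by (induction w) (auto intro: linopD(1)[OF linop_Dv])

lemma finite_words: "finite (words p q r)"
proof -
  have "words p q r \<subseteq> {w. set w \<subseteq> {0,1,2} \<and> length w = p + q + r}"
    unfolding words_def by auto
  moreover have "finite {w. set w \<subseteq> {0::nat,1,2} \<and> length w = p + q + r}"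
    by (rule finite_lists_length_eq) simp
  ultimately show ?thesis by (rule finite_subset)
qed

lemma words_Cons_iff:
  "(x # w \<in> words p q r) \<longleftrightarrow>
     (x = 0 \<and> p > 0 \<and> w \<in> words (p-1) q r) \<or> (x = 1 \<and> q > 0 \<and> w \<in> words p (q-1) r) \<or>
     (x = 2 \<and> r > 0 \<and> w \<in> words p q (r-1))"
proof (cases "x = 0")
  case True then show ?thesis unfolding words_def by auto
next
  case F0: False
  show ?thesis
  proof (cases "x = 1")
    case True then show ?thesis unfolding words_def by auto
  next
    case F1: False
    show ?thesis
    proof (cases "x = 2")
      case True then show ?thesis using F0 F1 unfolding words_def by auto
    next
      case False then show ?thesis using F0 F1 unfolding words_def by auto
    qed
  qed
qed

lemma words_000: "words 0 0 0 = {[]}"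
  unfolding words_def by auto

lemma words_decomp:
  assumes "p + q + r > 0"
  shows "words p q r = Cons 0 ` (if p > 0 then words (p-1) q r else {}) \<union>
                       Cons 1 ` (if q > 0 then words p (q-1) r else {}) \<union>
                       Cons 2 ` (if r > 0 then words p q (r-1) else {})"
proof (rule set_eqI)
  fix w
  show "w \<in> words p q r \<longleftrightarrow> w \<in> Cons 0 ` (if p > 0 then words (p-1) q r else {}) \<union>
                       Cons 1 ` (if q > 0 then words p (q-1) r else {}) \<union>
                       Cons 2 ` (if r > 0 then words p q (r-1) else {})"
  proof (cases w)
    case Nil
    have "[] \<notin> words p q r" using assms unfolding words_def by auto
    then show ?thesis using Nil by auto
  next
    case (Cons x w')
    show ?thesis unfolding Cons words_Cons_iff by auto
  qed
qed

lemma sum_words: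
  assumes "p + q + r > 0"
  shows "(\<Sum>w\<in>words p q r. F w) =
     (if p > 0 then (\<Sum>w\<in>words (p-1) q r. F (0#w)) else 0) +
     (if q > 0 then (\<Sum>w\<in>words p (q-1) r. F (1#w)) else 0) +
     (if r > 0 then (\<Sum>w\<in>words p q (r-1). F (2#w)) else 0)"
proof -
  define A where "A = (if p > 0 then words (p-1) q r else {})"
  define B where "B = (if q > 0 then words p (q-1) r else {})"
  define C where "C = (if r > 0 then words p q (r-1) else {})"
  have fA: "finite A" and fB: "finite B" and fC: "finite C"
    by (simp_all add: A_def B_def C_def finite_words)
  have "(\<Sum>w\<in>words p q r. F w) = (\<Sum>w\<in>Cons 0 ` A \<union> Cons 1 ` B \<union> Cons 2 ` C. F w)"
    using words_decomp[OF assms] by (simp add: A_def B_def C_def)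
  also have "\<dots> = (\<Sum>w\<in>Cons 0 ` A \<union> Cons 1 ` B. F w) + (\<Sum>w\<in>Cons 2 ` C. F w)"
    by (rule sum.union_disjoint) (use fA fB fC in auto)
  also have "\<dots> = (\<Sum>w\<in>Cons 0 ` A. F w) + (\<Sum>w\<in>Cons 1 ` B. F w) + (\<Sum>w\<in>Cons 2 ` C. F w)"
    by (subst sum.union_disjoint) (use fA fB in auto)
  also have "\<dots> = (\<Sum>w\<in>A. F (0#w)) + (\<Sum>w\<in>B. F (1#w)) + (\<Sum>w\<in>C. F (2#w))"
    by (simp add: sum.reindex)
  finally show ?thesis by (simp add: A_def B_def C_def)
qed

lemma card_words_rec:
  assumes "p + q + r > 0"
  shows "card (words p q r) = (if p > 0 then card (words (p-1) q r) else 0) +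
     (if q > 0 then card (words p (q-1) r) else 0) + (if r > 0 then card (words p q (r-1)) else 0)"
  using sum_words[OF assms, of "\<lambda>w. 1::nat"] by simp

lemma card_words: "fact p * fact q * fact r * card (words p q r) = (fact (p + q + r) :: nat)"
proof (induction "p + q + r" arbitrary: p q r)
  case 0
  then show ?case by (simp add: words_000)
next
  case (Suc n)
  have pos: "p + q + r > 0" using Suc.hyps(2) by linarith
  have t1: "fact p * fact q * fact r * (if p > 0 then card (words (p-1) q r) else 0) = p * fact n"
  proof (cases p)
    case 0 then show ?thesis by simp
  next
    case (Suc p')
    have "fact p' * fact q * fact r * card (words p' q r) = fact n"
      using Suc.hyps(1)[of p' q r] Suc.hyps(2) \<open>p = Suc p'\<close> by simp
    then show ?thesis using \<open>p = Suc p'\<close> by (simp add: algebra_simps)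
  qed
  have t2: "fact p * fact q * fact r * (if q > 0 then card (words p (q-1) r) else 0) = q * fact n"
  proof (cases q)
    case 0 then show ?thesis by simp
  next
    case (Suc q')
    have "fact p * fact q' * fact r * card (words p q' r) = fact n"
      using Suc.hyps(1)[of p q' r] Suc.hyps(2) \<open>q = Suc q'\<close> by simp
    then show ?thesis using \<open>q = Suc q'\<close> by (simp add: algebra_simps)
  qed
  have t3: "fact p * fact q * fact r * (if r > 0 then card (words p q (r-1)) else 0) = r * fact n"
  proof (cases r)
    case 0 then show ?thesis by simp
  next
    case (Suc r')
    have "fact p * fact q * fact r' * card (words p q r') = fact n"
      using Suc.hyps(1)[of p q r'] Suc.hyps(2) \<open>r = Suc r'\<close> by simp
    then show ?thesis using \<open>r = Suc r'\<close> by (simp add: algebra_simps)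
  qed
  have "fact p * fact q * fact r * card (words p q r) = p * fact n + q * fact n + r * fact n"
    unfolding card_words_rec[OF pos] using t1 t2 t3 by (simp add: algebra_simps)
  also have "\<dots> = (p + q + r) * fact n" by (simp add: algebra_simps)
  also have "\<dots> = fact (Suc n)" unfolding Suc.hyps(2)[symmetric] by simp
  finally show ?case using Suc.hyps(2) by simp
qed

definition Bn :: "nat \<Rightarrow> nat \<Rightarrow> nat \<Rightarrow> nat" where
  "Bn p q c = fact c * (p choose c) * (q choose c)"

definition bt :: "nat \<Rightarrow> nat \<Rightarrow> nat \<Rightarrow> complex" where
  "bt p q c = of_nat (Bn p q c) / 2 ^ c"

definition NF :: "nat \<Rightarrow> nat \<Rightarrow> nat \<Rightarrow> (R3 \<Rightarrow> complex) \<Rightarrow> (R3 \<Rightarrow> complex)" where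
  "NF p q r h = (\<lambda>x. \<Sum>c\<le>p. bt p q c * E (p-c) (q-c) (r+c) h x)"

definition Wd :: "nat \<Rightarrow> nat \<Rightarrow> nat \<Rightarrow> (R3 \<Rightarrow> complex) \<Rightarrow> (R3 \<Rightarrow> complex)" where
  "Wd p q r h = (\<lambda>x. \<Sum>w\<in>words p q r. word_op w h x)"

definition Mw :: "nat \<Rightarrow> nat \<Rightarrow> nat \<Rightarrow> complex" where
  "Mw p q r = of_nat (card (words p q r))"

lemma Bn_rec:
  assumes cp: "c \<le> p"
  shows "(p+q) * Bn p q c = p * Bn (p-1) q c + q * Bn p (q-1) c +
           (if c > 0 then 2 * q * (Suc p - c) * Bn p (q-1) (c-1) else 0)"
proof (cases "c \<le> q")
  case False
  then have z1: "q choose c = 0" and z2: "(q - 1) choose c = 0" by auto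
  have z3: "q * ((q - 1) choose (c - 1)) = 0"
  proof (cases q)
    case 0 then show ?thesis by simp
  next
    case (Suc q')
    have "q' < c - 1" using False Suc by linarith
    then show ?thesis using Suc by simp
  qed
  have b1: "Bn p q c = 0" "Bn (p-1) q c = 0" "Bn p (q-1) c = 0" unfolding Bn_def using z1 z2 by simp_all
  have "q * Bn p (q-1) (c-1) = fact (c-1) * (p choose (c-1)) * (q * ((q-1) choose (c-1)))"
    unfolding Bn_def by (simp only: ac_simps)
  then have b2: "q * Bn p (q-1) (c-1) = 0" unfolding z3 by simp
  have "2 * q * (Suc p - c) * Bn p (q-1) (c-1) = 2 * (Suc p - c) * (q * Bn p (q-1) (c-1))"
    by (simp only: ac_simps)
  then have b3: "(if c > 0 then 2 * q * (Suc p - c) * Bn p (q-1) (c-1) else 0) = 0"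
    unfolding b2 by simp
  show ?thesis unfolding b1 b3 by simp
next
  case cq: True
  define X where "X = fact c * (p choose c) * (q choose c)"
  have h1: "p * ((p - 1) choose c) = (p - c) * (p choose c)"
    using binomial_absorb_comp[of p c] by simp
  have h2: "q * ((q - 1) choose c) = (q - c) * (q choose c)"
    using binomial_absorb_comp[of q c] by simp
  have e1: "p * Bn (p-1) q c = (p - c) * X"
    unfolding Bn_def X_def by (metis (no_types, lifting) h1 mult.assoc mult.left_commute)
  have e2: "q * Bn p (q-1) c = (q - c) * X"
    unfolding Bn_def X_def by (metis (no_types, lifting) h2 mult.assoc mult.left_commute)
  have e3: "(if c > 0 then 2 * q * (Suc p - c) * Bn p (q-1) (c-1) else 0) = 2 * c * X"
  proof (cases c)
    case 0 then show ?thesis by simp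
  next
    case (Suc k)
    have h3: "q * ((q - 1) choose k) = Suc k * (q choose Suc k)"
      using binomial_absorption[of k q] by simp
    have h4: "(Suc p - Suc k) * (p choose k) = Suc k * (p choose Suc k)"
      using absorb[of p k] by simp
    have "2 * q * (Suc p - c) * Bn p (q-1) (c-1) = 2 * fact k * ((Suc p - Suc k) * (p choose k)) * (q * ((q - 1) choose k))"
      unfolding Bn_def Suc by (simp add: algebra_simps)
    also have "\<dots> = 2 * fact k * (Suc k * (p choose Suc k)) * (Suc k * (q choose Suc k))"
      unfolding h3 h4 ..
    also have "\<dots> = 2 * c * X"
      unfolding X_def Suc by (simp add: algebra_simps)
    finally show ?thesis using Suc by simp
  qed
  have "(p+q) * Bn p q c = ((p - c) + (q - c) + 2 * c) * X"
    using cp cq unfolding Bn_def X_def by simp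
  also have "\<dots> = (p - c) * X + (q - c) * X + 2 * c * X"
    by (simp add: add_mult_distrib)
  finally show ?thesis unfolding e1 e2 e3 .
qed

lemma bt_rec:
  assumes cp: "c \<le> p"
  shows "of_nat (p+q) * bt p q c = of_nat p * bt (p-1) q c + of_nat q * (bt p (q-1) c +
           (if c > 0 then of_nat (Suc p - c) * bt p (q-1) (c-1) else 0))"
proof -
  have "of_nat ((p+q) * Bn p q c) = (of_nat (p * Bn (p-1) q c + q * Bn p (q-1) c +
           (if c > 0 then 2 * q * (Suc p - c) * Bn p (q-1) (c-1) else 0)) :: complex)"
    using Bn_rec[OF cp] by simp
  then have eq: "of_nat (p+q) * of_nat (Bn p q c) = (of_nat p * of_nat (Bn (p-1) q c) + of_nat q * of_nat (Bn p (q-1) c) +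
           (if c > 0 then 2 * of_nat q * of_nat (Suc p - c) * of_nat (Bn p (q-1) (c-1)) else 0) :: complex)"
    by (simp del: of_nat_add add: of_nat_mult) (simp add: of_nat_add)
  show ?thesis
  proof (cases c)
    case 0
    then show ?thesis using eq by (simp add: bt_def algebra_simps)
  next
    case (Suc k)
    have "of_nat (p+q) * bt p q c = of_nat (p+q) * of_nat (Bn p q c) / 2 ^ c" by (simp add: bt_def)
    also have "\<dots> = (of_nat p * of_nat (Bn (p-1) q c) + of_nat q * of_nat (Bn p (q-1) c) +
           2 * of_nat q * of_nat (Suc p - c) * of_nat (Bn p (q-1) (c-1))) / 2 ^ c"
      unfolding eq using Suc by simp
    also have "\<dots> = of_nat p * bt (p-1) q c + of_nat q * (bt p (q-1) c + of_nat (Suc p - c) * bt p (q-1) (c-1))"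
      unfolding bt_def Suc by (simp add: field_simps)
    finally show ?thesis using Suc by simp
  qed
qed

lemma Mw_fact: "Mw p q r * (fact p * fact q * fact r) = fact (p + q + r)"
proof -
  have "(of_nat (fact p * fact q * fact r * card (words p q r)) :: complex) = of_nat (fact (p+q+r))"
    using card_words[of p q r] by (simp only:)
  then show ?thesis unfolding Mw_def by (simp add: algebra_simps)
qed

lemma coef_rec:
  assumes pos: "p + q + r > 0" and cp: "c \<le> p"
  shows "Mw p q r * bt p q c = (if p > 0 then Mw (p-1) q r * bt (p-1) q c else 0) +
     (if q > 0 then Mw p (q-1) r * (bt p (q-1) c + (if c > 0 then of_nat (Suc p - c) * bt p (q-1) (c-1) else 0)) else 0) +
     (if r > 0 then Mw p q (r-1) * bt p q c else 0)"
proof -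
  define n where "n = p + q + r - 1"
  have N: "p + q + r = Suc n" using pos by (simp add: n_def)
  define K :: complex where "K = fact n / (fact p * fact q * fact r)"
  have fnz: "(fact p * fact q * fact r :: complex) \<noteq> 0" by simp
  have M0: "Mw p q r = of_nat (Suc n) * K"
  proof -
    have "Mw p q r * (fact p * fact q * fact r) = of_nat (Suc n) * fact n"
      using Mw_fact[of p q r] unfolding N by simp
    then show ?thesis unfolding K_def using fnz by (simp add: field_simps)
  qed
  have M1: "(if p > 0 then Mw (p-1) q r * X else 0) = of_nat p * K * X" for X
  proof (cases p)
    case 0 then show ?thesis by simp
  next
    case (Suc p')
    have "Mw p' q r * (fact p' * fact q * fact r) = fact n"
      using Mw_fact[of p' q r] N Suc by simp
    then have "Mw p' q r = of_nat p * K"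
      unfolding K_def using Suc fnz by (simp add: field_simps)
    then show ?thesis using Suc by simp
  qed
  have M2: "(if q > 0 then Mw p (q-1) r * X else 0) = of_nat q * K * X" for X
  proof (cases q)
    case 0 then show ?thesis by simp
  next
    case (Suc q')
    have "Mw p q' r * (fact p * fact q' * fact r) = fact n"
      using Mw_fact[of p q' r] N Suc by simp
    then have "Mw p q' r = of_nat q * K"
      unfolding K_def using Suc fnz by (simp add: field_simps)
    then show ?thesis using Suc by simp
  qed
  have M3: "(if r > 0 then Mw p q (r-1) * X else 0) = of_nat r * K * X" for X
  proof (cases r)
    case 0 then show ?thesis by simp
  next
    case (Suc r')
    have "Mw p q r' * (fact p * fact q * fact r') = fact n"
      using Mw_fact[of p q r'] N Suc by simp
    then have "Mw p q r' = of_nat r * K"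
      unfolding K_def using Suc fnz by (simp add: field_simps)
    then show ?thesis using Suc by simp
  qed
  have "Mw p q r * bt p q c = K * (of_nat (p+q) * bt p q c + of_nat r * bt p q c)"
    unfolding M0 N[symmetric] by (simp add: algebra_simps)
  also have "\<dots> = K * (of_nat p * bt (p-1) q c + of_nat q * (bt p (q-1) c +
           (if c > 0 then of_nat (Suc p - c) * bt p (q-1) (c-1) else 0)) + of_nat r * bt p q c)"
    unfolding bt_rec[OF cp] ..
  also have "\<dots> = of_nat p * K * bt (p-1) q c + of_nat q * K * (bt p (q-1) c +
           (if c > 0 then of_nat (Suc p - c) * bt p (q-1) (c-1) else 0)) + of_nat r * K * bt p q c"
    by (simp add: algebra_simps)
  finally show ?thesis unfolding M1 M2 M3 .
qed

lemma smNF: "smooth3 h \<Longrightarrow> smooth3 (NF p q r h)"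
  unfolding NF_def by (intro smooth_sum) (auto intro: smE)

lemma NF_D1:
  assumes h: "smooth3 h" and p: "p > 0"
  shows "D1 (NF (p-1) q r h) = (\<lambda>x. \<Sum>c\<le>p. bt (p-1) q c * E (p-c) (q-c) (r+c) h x)"
proof -
  have "D1 (NF (p-1) q r h) = (\<lambda>x. \<Sum>c\<le>p-1. bt (p-1) q c * D1 (E (p-1-c) (q-c) (r+c) h) x)"
    unfolding NF_def by (rule linop_sum[OF linop_D1]) (auto intro: smE h)
  also have "\<dots> = (\<lambda>x. \<Sum>c\<le>p-1. bt (p-1) q c * E (p-c) (q-c) (r+c) h x)"
  proof (rule ext, rule sum.cong[OF refl])
    fix x c assume c: "c \<in> {..p-1}"
    have "Suc (p - 1 - c) = p - c" using c p by auto
    then show "bt (p-1) q c * D1 (E (p-1-c) (q-c) (r+c) h) x = bt (p-1) q c * E (p-c) (q-c) (r+c) h x"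
      by (simp only: D1_E)
  qed
  also have "\<dots> = (\<lambda>x. \<Sum>c\<le>p. bt (p-1) q c * E (p-c) (q-c) (r+c) h x)"
  proof (rule ext)
    fix x
    have "p = Suc (p-1)" using p by simp
    then have "(\<Sum>c\<le>p. bt (p-1) q c * E (p-c) (q-c) (r+c) h x) =
       (\<Sum>c\<le>p-1. bt (p-1) q c * E (p-c) (q-c) (r+c) h x) + bt (p-1) q p * E 0 (q-p) (r+p) h x"
      by (metis (no_types, lifting) diff_self_eq_0 sum.atMost_Suc)
    moreover have "bt (p-1) q p = 0" using p by (simp add: bt_def Bn_def)
    ultimately show "(\<Sum>c\<le>p-1. bt (p-1) q c * E (p-c) (q-c) (r+c) h x) = (\<Sum>c\<le>p. bt (p-1) q c * E (p-c) (q-c) (r+c) h x)"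
      by simp
  qed
  finally show ?thesis .
qed

lemma NF_D3:
  assumes h: "smooth3 h" and r: "r > 0"
  shows "D3 (NF p q (r-1) h) = (\<lambda>x. \<Sum>c\<le>p. bt p q c * E (p-c) (q-c) (r+c) h x)"
proof -
  have "D3 (NF p q (r-1) h) = (\<lambda>x. \<Sum>c\<le>p. bt p q c * D3 (E (p-c) (q-c) (r-1+c) h) x)"
    unfolding NF_def by (rule linop_sum[OF linop_D3]) (auto intro: smE h)
  also have "\<dots> = (\<lambda>x. \<Sum>c\<le>p. bt p q c * E (p-c) (q-c) (r+c) h x)"
    by (rule ext, rule sum.cong[OF refl]) (use r in \<open>auto simp: D3_E[OF h]\<close>)
  finally show ?thesis .
qed

lemma NF_D2:
  assumes h: "smooth3 h" and q: "q > 0"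
  shows "D2 (NF p (q-1) r h) = (\<lambda>x. \<Sum>c\<le>p. (bt p (q-1) c +
       (if c > 0 then of_nat (Suc p - c) * bt p (q-1) (c-1) else 0)) * E (p-c) (q-c) (r+c) h x)"
proof -
  define G where "G c x = E (p-c) (q-c) (r+c) h x" for c x
  define \<gamma> where "\<gamma> c = (if c > 0 then of_nat (Suc p - c) * bt p (q-1) (c-1) else (0::complex))" for c
  have "D2 (NF p (q-1) r h) = (\<lambda>x. \<Sum>c\<le>p. bt p (q-1) c * D2 (E (p-c) (q-1-c) (r+c) h) x)"
    unfolding NF_def by (rule linop_sum[OF linop_D2]) (auto intro: smE h)
  also have "\<dots> = (\<lambda>x. \<Sum>c\<le>p. bt p (q-1) c * G c x + bt p (q-1) c * of_nat (p - c) * G (Suc c) x)"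
  proof (rule ext, rule sum.cong[OF refl])
    fix x c assume c: "c \<in> {..p}"
    have A: "bt p (q-1) c * E (p-c) (Suc (q-1-c)) (r+c) h x = bt p (q-1) c * G c x"
    proof (cases "c \<le> q - 1")
      case True
      have "Suc (q-1-c) = q - c" using True q by linarith
      then show ?thesis by (simp only: G_def)
    next
      case False then show ?thesis by (simp add: bt_def Bn_def)
    qed
    have B: "E (p-c-1) (q-1-c) (Suc (r+c)) h x = G (Suc c) x"
      by (simp add: G_def)
    show "bt p (q-1) c * D2 (E (p-c) (q-1-c) (r+c) h) x = bt p (q-1) c * G c x + bt p (q-1) c * of_nat (p - c) * G (Suc c) x"
      unfolding D2_E[OF h] using A B by (simp add: algebra_simps)
  qed
  also have "\<dots> = (\<lambda>x. \<Sum>c\<le>p. (bt p (q-1) c + \<gamma> c) * G c x)"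
  proof (rule ext)
    fix x
    have "(\<Sum>c\<le>p. \<gamma> c * G c x) = (\<Sum>c\<le>Suc p. \<gamma> c * G c x)"
      by (simp add: \<gamma>_def)
    also have "\<dots> = (\<Sum>c\<le>p. \<gamma> (Suc c) * G (Suc c) x)"
    proof -
      have g0: "\<gamma> 0 = 0" by (simp add: \<gamma>_def)
      show ?thesis by (simp only: sum.atMost_Suc_shift g0) simp
    qed
    also have "\<dots> = (\<Sum>c\<le>p. bt p (q-1) c * of_nat (p - c) * G (Suc c) x)"
      by (simp add: \<gamma>_def algebra_simps)
    finally have eq: "(\<Sum>c\<le>p. \<gamma> c * G c x) = (\<Sum>c\<le>p. bt p (q-1) c * of_nat (p - c) * G (Suc c) x)" .
    have d1: "(\<Sum>c\<le>p. (bt p (q-1) c + \<gamma> c) * G c x) = (\<Sum>c\<le>p. bt p (q-1) c * G c x) + (\<Sum>c\<le>p. \<gamma> c * G c x)"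
      by (simp only: distrib_right sum.distrib)
    have d2: "(\<Sum>c\<le>p. bt p (q-1) c * G c x + bt p (q-1) c * of_nat (p - c) * G (Suc c) x) =
       (\<Sum>c\<le>p. bt p (q-1) c * G c x) + (\<Sum>c\<le>p. bt p (q-1) c * of_nat (p - c) * G (Suc c) x)"
      by (rule sum.distrib)
    show "(\<Sum>c\<le>p. bt p (q-1) c * G c x + bt p (q-1) c * of_nat (p - c) * G (Suc c) x) =
        (\<Sum>c\<le>p. (bt p (q-1) c + \<gamma> c) * G c x)"
      unfolding d1 d2 eq ..
  qed
  finally show ?thesis by (simp add: G_def \<gamma>_def)
qed

lemma linop_Wsum:
  assumes T: "linop T" and h: "smooth3 h"
  shows "T (Wd p q r h) = (\<lambda>x. \<Sum>w\<in>words p q r. T (word_op w h) x)"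
proof -
  have "T (Wd p q r h) = T (\<lambda>x. \<Sum>w\<in>words p q r. 1 * word_op w h x)"
    by (simp add: Wd_def)
  also have "\<dots> = (\<lambda>x. \<Sum>w\<in>words p q r. 1 * T (word_op w h) x)"
    by (rule linop_sum[OF T finite_words]) (auto intro: sm_word_op h)
  finally show ?thesis by simp
qed

lemma smWd: "smooth3 h \<Longrightarrow> smooth3 (Wd p q r h)"
proof -
  assume h: "smooth3 h"
  have "smooth3 (\<lambda>x. \<Sum>w\<in>words p q r. 1 * word_op w h x)"
    by (rule smooth_sum[OF finite_words]) (auto intro: sm_word_op h)
  then show ?thesis by (simp add: Wd_def)
qed

lemma W_NF:
  assumes h: "smooth3 h"
  shows "Wd p q r h = (\<lambda>x. Mw p q r * NF p q r h x)"
proof (induction "p + q + r" arbitrary: p q r)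
  case 0
  then have z: "p = 0" "q = 0" "r = 0" by auto
  show ?case unfolding z by (rule ext) (simp add: Wd_def Mw_def NF_def words_000 bt_def Bn_def E_def)
next
  case (Suc n)
  have pos: "p + q + r > 0" using Suc.hyps(2) by linarith
  define G where "G c x = E (p-c) (q-c) (r+c) h x" for c x
  define a1 where "a1 c = (if p > 0 then Mw (p-1) q r * bt (p-1) q c else 0)" for c
  define a2 where "a2 c = (if q > 0 then Mw p (q-1) r * (bt p (q-1) c + (if c > 0 then of_nat (Suc p - c) * bt p (q-1) (c-1) else 0)) else 0)" for c
  define a3 where "a3 c = (if r > 0 then Mw p q (r-1) * bt p q c else 0)" for c
  show ?case
  proof (rule ext)
    fix x
    have "Wd p q r h x = (if p > 0 then D1 (Wd (p-1) q r h) x else 0) +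
        (if q > 0 then D2 (Wd p (q-1) r h) x else 0) + (if r > 0 then D3 (Wd p q (r-1) h) x else 0)"
      unfolding Wd_def[of p q r] sum_words[OF pos]
      by (simp add: linop_Wsum[OF linop_D1 h] linop_Wsum[OF linop_D2 h] linop_Wsum[OF linop_D3 h])
    also have "\<dots> = (\<Sum>c\<le>p. a1 c * G c x) + (\<Sum>c\<le>p. a2 c * G c x) + (\<Sum>c\<le>p. a3 c * G c x)"
    proof -
      have t1: "(if p > 0 then D1 (Wd (p-1) q r h) x else 0) = (\<Sum>c\<le>p. a1 c * G c x)"
      proof (cases "p > 0")
        case True
        have "Wd (p-1) q r h = (\<lambda>x. Mw (p-1) q r * NF (p-1) q r h x)"
          by (rule Suc.hyps(1)) (use Suc.hyps(2) True in linarith)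
        then have "D1 (Wd (p-1) q r h) = (\<lambda>x. Mw (p-1) q r * D1 (NF (p-1) q r h) x)"
          using linopD(3)[OF linop_D1 smNF[OF h]] by simp
        then show ?thesis using True unfolding NF_D1[OF h True] a1_def G_def
          by (simp add: sum_distrib_left algebra_simps)
      next
        case False then show ?thesis by (simp add: a1_def)
      qed
      have t2: "(if q > 0 then D2 (Wd p (q-1) r h) x else 0) = (\<Sum>c\<le>p. a2 c * G c x)"
      proof (cases "q > 0")
        case True
        have "Wd p (q-1) r h = (\<lambda>x. Mw p (q-1) r * NF p (q-1) r h x)"
          by (rule Suc.hyps(1)) (use Suc.hyps(2) True in linarith)
        then have "D2 (Wd p (q-1) r h) = (\<lambda>x. Mw p (q-1) r * D2 (NF p (q-1) r h) x)"
          using linopD(3)[OF linop_D2 smNF[OF h]] by simp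
        then show ?thesis using True unfolding NF_D2[OF h True] a2_def G_def
          by (simp add: sum_distrib_left mult.assoc)
      next
        case False then show ?thesis by (simp add: a2_def)
      qed
      have t3: "(if r > 0 then D3 (Wd p q (r-1) h) x else 0) = (\<Sum>c\<le>p. a3 c * G c x)"
      proof (cases "r > 0")
        case True
        have "Wd p q (r-1) h = (\<lambda>x. Mw p q (r-1) * NF p q (r-1) h x)"
          by (rule Suc.hyps(1)) (use Suc.hyps(2) True in linarith)
        then have "D3 (Wd p q (r-1) h) = (\<lambda>x. Mw p q (r-1) * D3 (NF p q (r-1) h) x)"
          using linopD(3)[OF linop_D3 smNF[OF h]] by simp
        then show ?thesis using True unfolding NF_D3[OF h True] a3_def G_def
          by (simp add: sum_distrib_left algebra_simps)
      next
        case False then show ?thesis by (simp add: a3_def)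
      qed
      show ?thesis unfolding t1 t2 t3 ..
    qed
    also have "\<dots> = (\<Sum>c\<le>p. (a1 c + a2 c + a3 c) * G c x)"
      by (simp only: distrib_right sum.distrib)
    also have "\<dots> = (\<Sum>c\<le>p. Mw p q r * bt p q c * G c x)"
    proof (rule sum.cong[OF refl])
      fix c assume "c \<in> {..p}"
      then have "c \<le> p" by simp
      then have "a1 c + a2 c + a3 c = Mw p q r * bt p q c"
        unfolding a1_def a2_def a3_def by (rule coef_rec[OF pos, symmetric])
      then show "(a1 c + a2 c + a3 c) * G c x = Mw p q r * bt p q c * G c x" by simp
    qed
    also have "\<dots> = Mw p q r * NF p q r h x"
      by (simp add: NF_def G_def sum_distrib_left mult.assoc)
    finally show "Wd p q r h x = Mw p q r * NF p q r h x" .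
  qed
qed

lemma Mw_nz: "Mw p q r \<noteq> 0"
proof -
  have "card (words p q r) \<noteq> 0"
    using card_words[of p q r] by (metis fact_nonzero mult_0_right)
  then show ?thesis by (simp add: Mw_def)
qed

lemma symm_NF:
  assumes h: "smooth3 h"
  shows "symm p q r h = NF p q r h"
proof (rule ext)
  fix x
  have "symm p q r h x = Wd p q r h x / Mw p q r"
    by (simp add: symm_def Wd_def Mw_def)
  also have "\<dots> = NF p q r h x"
    unfolding W_NF[OF h] using Mw_nz by simp
  finally show "symm p q r h x = NF p q r h x" .
qed

lemma tri_sum:
  fixes f :: "nat \<Rightarrow> nat \<Rightarrow> 'a::comm_monoid_add"
  shows "(\<Sum>m\<le>a. \<Sum>c\<le>a-m. f m c) = (\<Sum>j\<le>a. \<Sum>m\<le>j. f m (j-m))"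
proof -
  have "(\<Sum>m\<le>a. \<Sum>c\<le>a-m. f m c) = (\<Sum>(m,c)\<in>(SIGMA m:{..a}. {..a-m}). f m c)"
    by (rule sum.Sigma) auto
  also have "(SIGMA m:{..a}. {..a-m}) = {(m,c). m+c \<le> a}" by auto
  also have "(\<Sum>(m,c)\<in>{(m,c). m+c \<le> a}. f m c) = (\<Sum>j\<le>a. \<Sum>m\<le>j. f m (j-m))"
    by (rule sum.triangle_reindex_eq)
  finally show ?thesis .
qed

lemma symm_exp: "smooth3 h \<Longrightarrow> symm p q r h x = (\<Sum>c\<le>p. bt p q c * E (p-c) (q-c) (r+c) h x)"
  by (simp add: symm_NF NF_def)

lemma choose_mult2: "m \<le> j \<Longrightarrow> (a choose m) * ((a - m) choose (j - m)) = (a choose j) * (j choose m)"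
proof (cases "j \<le> a")
  case True
  assume "m \<le> j"
  then show ?thesis using choose_mult[of m j a] True by simp
next
  case False
  assume mj: "m \<le> j"
  show ?thesis
  proof (cases "m \<le> a")
    case True
    have "a - m < j - m" using False mj True by linarith
    then have z1: "(a - m) choose (j - m) = 0" by (rule binomial_eq_0)
    have z2: "a choose j = 0" using False by simp
    show ?thesis unfolding z1 z2 by simp
  next
    case False
    have am: "a < m" using False by linarith
    have aj: "a < j" using False mj by linarith
    have z1: "a choose m = 0" by (rule binomial_eq_0[OF am])
    have z2: "a choose j = 0" by (rule binomial_eq_0[OF aj])
    show ?thesis unfolding z1 z2 by simp
  qed
qed

lemma coef_nat: "m \<le> j \<Longrightarrow> (fact m * (a choose m) * (b choose m)) * (fact (j-m) * ((a-m) choose (j-m)) * ((b-m) choose (j-m)))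
   = fact j * (a choose j) * (b choose j) * (j choose m)"
proof -
  assume mj: "m \<le> j"
  have "(fact m * (a choose m) * (b choose m)) * (fact (j-m) * ((a-m) choose (j-m)) * ((b-m) choose (j-m)))
     = (fact m * fact (j-m)) * ((a choose m) * ((a-m) choose (j-m))) * ((b choose m) * ((b-m) choose (j-m)))"
    by (simp only: ac_simps)
  also have "\<dots> = (fact m * fact (j-m)) * ((a choose j) * (j choose m)) * ((b choose j) * (j choose m))"
    unfolding choose_mult2[OF mj] ..
  also have "\<dots> = (fact m * fact (j-m) * (j choose m)) * (a choose j) * (b choose j) * (j choose m)"
    by (simp only: ac_simps)
  also have "\<dots> = fact j * (a choose j) * (b choose j) * (j choose m)"
    unfolding binomial_fact_lemma[OF mj] ..
  finally show ?thesis .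
qed

lemma Dpm_NF:
  assumes h: "smooth3 h"
  shows "Dpm \<sigma> a b h = (\<lambda>x. \<Sum>j\<le>a. of_nat (fact j * (a choose j) * (b choose j)) * ((1+\<sigma>)/2)^j * E (a-j) (b-j) j h x)"
proof (rule ext)
  fix x
  define w where "w m = \<sigma>^m / 2^m * of_nat (fact m * (a choose m) * (b choose m))" for m
  define f where "f m c = w m * (bt (a-m) (b-m) c * E (a-m-c) (b-m-c) (m+c) h x)" for m c
  have "Dpm \<sigma> a b h x = (\<Sum>m\<le>min a b. w m * symm (a-m) (b-m) m h x)"
    by (simp add: Dpm_def w_def)
  also have "\<dots> = (\<Sum>m\<le>a. w m * symm (a-m) (b-m) m h x)"
    by (rule sum.mono_neutral_left) (auto simp: w_def)
  also have "\<dots> = (\<Sum>m\<le>a. \<Sum>c\<le>a-m. f m c)"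
    by (simp add: symm_exp[OF h] f_def sum_distrib_left)
  also have "\<dots> = (\<Sum>j\<le>a. \<Sum>m\<le>j. f m (j-m))"
    by (rule tri_sum)
  also have "\<dots> = (\<Sum>j\<le>a. of_nat (fact j * (a choose j) * (b choose j)) * ((1+\<sigma>)/2)^j * E (a-j) (b-j) j h x)"
  proof (rule sum.cong[OF refl])
    fix j assume "j \<in> {..a}"
    then have ja: "j \<le> a" by simp
    define C where "C = (of_nat (fact j * (a choose j) * (b choose j)) :: complex)"
    have fm: "f m (j-m) = C / 2^j * (of_nat (j choose m) * \<sigma>^m) * E (a-j) (b-j) j h x" if mj: "m \<le> j" for m
    proof -
      have cw: "w m * bt (a-m) (b-m) (j-m) = C / 2^j * (of_nat (j choose m) * \<sigma>^m)"
      proof -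
        have p2: "(2::complex)^m * 2^(j-m) = 2^j" using mj by (simp add: power_add[symmetric])
        have "w m * bt (a-m) (b-m) (j-m) = \<sigma>^m * of_nat ((fact m * (a choose m) * (b choose m)) * (fact (j-m) * ((a-m) choose (j-m)) * ((b-m) choose (j-m)))) / (2^m * 2^(j-m))"
          unfolding w_def bt_def Bn_def by (simp add: field_simps)
        also have "\<dots> = C / 2^j * (of_nat (j choose m) * \<sigma>^m)"
          unfolding coef_nat[OF mj] p2 C_def by (simp add: field_simps)
        finally show ?thesis .
      qed
      show ?thesis
      proof (cases "m \<le> b")
        case True
        have idx: "a - m - (j - m) = a - j" "b - m - (j - m) = b - j" "m + (j - m) = j" using mj ja True by auto
        have "f m (j-m) = (w m * bt (a-m) (b-m) (j-m)) * E (a-j) (b-j) j h x"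
          unfolding f_def idx by (simp only: mult.assoc)
        then show ?thesis unfolding cw .
      next
        case False
        then have w0: "w m = 0" by (simp add: w_def)
        have "b < j" using False mj by linarith
        then have "b choose j = 0" by (rule binomial_eq_0)
        then have C0: "C = 0" by (simp add: C_def)
        show ?thesis unfolding f_def C0 w0 by simp
      qed
    qed
    have "(\<Sum>m\<le>j. f m (j-m)) = (\<Sum>m\<le>j. C / 2^j * (of_nat (j choose m) * \<sigma>^m) * E (a-j) (b-j) j h x)"
      by (rule sum.cong[OF refl]) (simp add: fm)
    also have "\<dots> = C / 2^j * (\<Sum>m\<le>j. of_nat (j choose m) * \<sigma>^m * 1^(j-m)) * E (a-j) (b-j) j h x"
      by (simp add: sum_distrib_left sum_distrib_right mult.assoc)
    also have "\<dots> = C / 2^j * (\<sigma> + 1)^j * E (a-j) (b-j) j h x"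
      unfolding binomial_ring ..
    also have "\<dots> = C * ((1+\<sigma>)/2)^j * E (a-j) (b-j) j h x"
      by (simp add: power_divide add.commute)
    finally show "(\<Sum>m\<le>j. f m (j-m)) = of_nat (fact j * (a choose j) * (b choose j)) * ((1+\<sigma>)/2)^j * E (a-j) (b-j) j h x"
      unfolding C_def .
  qed
  finally show "Dpm \<sigma> a b h x = (\<Sum>j\<le>a. of_nat (fact j * (a choose j) * (b choose j)) * ((1+\<sigma>)/2)^j * E (a-j) (b-j) j h x)" .
qed

lemma Dc_NF1:
  assumes h: "smooth3 h"
  shows "Dc s a h = (\<lambda>x. \<Sum>j\<le>a. (\<Sum>m\<le>j. 1 / 2^m * of_nat (a choose m) * Cay m s (of_nat a) * bt (a-m) (a-m) (j-m)) * E (a-j) (a-j) j h x)"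
proof (rule ext)
  fix x
  define w where "w m = 1 / 2^m * of_nat (a choose m) * Cay m s (of_nat a)" for m
  define f where "f m c = w m * (bt (a-m) (a-m) c * E (a-m-c) (a-m-c) (m+c) h x)" for m c
  have "Dc s a h x = (\<Sum>m\<le>a. w m * symm (a-m) (a-m) m h x)"
    by (simp add: Dc_def w_def)
  also have "\<dots> = (\<Sum>m\<le>a. \<Sum>c\<le>a-m. f m c)"
    by (simp add: symm_exp[OF h] f_def sum_distrib_left)
  also have "\<dots> = (\<Sum>j\<le>a. \<Sum>m\<le>j. f m (j-m))"
    by (rule tri_sum)
  also have "\<dots> = (\<Sum>j\<le>a. (\<Sum>m\<le>j. w m * bt (a-m) (a-m) (j-m)) * E (a-j) (a-j) j h x)"
  proof (rule sum.cong[OF refl])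
    fix j assume "j \<in> {..a}"
    then have ja: "j \<le> a" by simp
    have "f m (j-m) = w m * bt (a-m) (a-m) (j-m) * E (a-j) (a-j) j h x" if "m \<in> {..j}" for m
    proof -
      have "a - m - (j - m) = a - j" "m + (j - m) = j" using that ja by auto
      then show ?thesis unfolding f_def by (simp add: mult.assoc)
    qed
    then show "(\<Sum>m\<le>j. f m (j-m)) = (\<Sum>m\<le>j. w m * bt (a-m) (a-m) (j-m)) * E (a-j) (a-j) j h x"
      by (simp add: sum_distrib_right)
  qed
  finally show "Dc s a h x = (\<Sum>j\<le>a. (\<Sum>m\<le>j. 1 / 2^m * of_nat (a choose m) * Cay m s (of_nat a) * bt (a-m) (a-m) (j-m)) * E (a-j) (a-j) j h x)"
    unfolding w_def .
qed

lemma tri_sum':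
  fixes f :: "nat \<Rightarrow> nat \<Rightarrow> 'a::comm_monoid_add"
  shows "(\<Sum>m\<le>a. \<Sum>c\<le>a-m. f m c) = (\<Sum>j\<le>a. \<Sum>m\<le>j. f m (j-m))"
proof -
  have "(\<Sum>m\<le>a. \<Sum>c\<le>a-m. f m c) = (\<Sum>(m,c)\<in>(SIGMA m:{..a}. {..a-m}). f m c)"
    by (rule sum.Sigma) auto
  also have "(SIGMA m:{..a}. {..a-m}) = {(m,c). m+c \<le> a}" by auto
  also have "(\<Sum>(m,c)\<in>{(m,c). m+c \<le> a}. f m c) = (\<Sum>j\<le>a. \<Sum>m\<le>j. f m (j-m))"
    by (rule sum.triangle_reindex_eq)
  finally show ?thesis .
qed

lemma falling_gch: "falling z i = fact i * (z gchoose i)"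
  unfolding falling_def gbinomial_prod_rev by (simp add: lessThan_atLeast0)

lemma rising_gch: "rising w n = (-1)^n * fact n * ((-w) gchoose n)"
proof -
  have "rising w n = pochhammer w n"
    unfolding rising_def pochhammer_prod by (simp add: lessThan_atLeast0)
  also have "\<dots> = (-1)^n * fact n * ((-w) gchoose n)"
    unfolding gbinomial_pochhammer by (simp add: field_simps)
  finally show ?thesis .
qed

lemma Cay_gch: "Cay m (2*z - of_nat a) (of_nat a) =
   fact m * (\<Sum>i\<le>m. (z gchoose i) * ((-1)^(m-i) * ((of_nat a - z) gchoose (m-i))))"
proof -
  have e1: "(2*z - of_nat a + of_nat a) / 2 = z" by simp
  have e2: "(2*z - of_nat a - of_nat a) / 2 = z - of_nat a" by simp
  have "Cay m (2*z - of_nat a) (of_nat a) = (\<Sum>i\<le>m. of_nat (m choose i) * falling z i * rising (z - of_nat a) (m - i))"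
    unfolding Cay_def e1 e2 ..
  also have "\<dots> = (\<Sum>i\<le>m. fact m * ((z gchoose i) * ((-1)^(m-i) * ((of_nat a - z) gchoose (m-i)))))"
  proof (rule sum.cong[OF refl])
    fix i assume "i \<in> {..m}"
    then have im: "i \<le> m" by simp
    have f: "(of_nat (m choose i) * fact i * fact (m - i) :: complex) = fact m"
      using binomial_fact_lemma[OF im] by (metis (mono_tags, lifting) of_nat_fact of_nat_mult mult.commute mult.left_commute)
    have "of_nat (m choose i) * falling z i * rising (z - of_nat a) (m - i) =
       (of_nat (m choose i) * fact i * fact (m - i)) * ((z gchoose i) * ((-1)^(m-i) * ((of_nat a - z) gchoose (m-i))))"
      unfolding falling_gch rising_gch by (simp add: algebra_simps)
    then show "of_nat (m choose i) * falling z i * rising (z - of_nat a) (m - i) =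
       fact m * ((z gchoose i) * ((-1)^(m-i) * ((of_nat a - z) gchoose (m-i))))"
      unfolding f .
  qed
  finally show ?thesis by (simp add: sum_distrib_left)
qed

lemma inner_sum:
  fixes z :: complex
  assumes ij: "i \<le> j" and ja: "j \<le> (a::nat)"
  shows "(\<Sum>n\<le>j-i. (-1)^n * ((of_nat a - z) gchoose n) * of_nat ((a - (i+n)) choose (j - (i+n)))) =
     ((z - of_nat i) gchoose (j - i))"
proof -
  define K where "K = j - i"
  have "(\<Sum>n\<le>K. (-1)^n * ((of_nat a - z) gchoose n) * of_nat ((a - (i+n)) choose (j - (i+n)))) =
        (\<Sum>n\<le>K. (-1)^K * (((of_nat a - z) gchoose n) * ((of_nat j - of_nat a - 1) gchoose (K - n))))"
  proof (rule sum.cong[OF refl])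
    fix n assume "n \<in> {..K}"
    then have nK: "n \<le> K" by simp
    have jin: "j - (i+n) = K - n" unfolding K_def by simp
    have c1: "(of_nat ((a - (i+n)) choose (K - n)) :: complex) =
        (-1)^(K-n) * ((of_nat (K-n) - of_nat (a - (i+n)) - 1) gchoose (K - n))"
      unfolding binomial_gbinomial by (rule gbinomial_negated_upper)
    have c2: "(of_nat (K-n) - of_nat (a - (i+n)) - 1 :: complex) = of_nat j - of_nat a - 1"
      using nK ij ja unfolding K_def by (simp add: of_nat_diff)
    have c3: "(-1::complex)^n * (-1)^(K-n) = (-1)^K"
      using nK by (simp add: power_add[symmetric])
    have c1': "(of_nat ((a - (i+n)) choose (j - (i+n))) :: complex) = (-1)^(K-n) * ((of_nat j - of_nat a - 1) gchoose (K - n))"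
      using c1 c2 jin by simp
    have "(-1)^n * ((of_nat a - z) gchoose n) * of_nat ((a - (i+n)) choose (j - (i+n))) =
        (-1)^n * ((of_nat a - z) gchoose n) * ((-1)^(K-n) * ((of_nat j - of_nat a - 1) gchoose (K - n)))"
      by (rule arg_cong[where f="\<lambda>t. (-1)^n * ((of_nat a - z) gchoose n) * t", OF c1'])
    also have "\<dots> = ((-1)^n * (-1)^(K-n)) * (((of_nat a - z) gchoose n) * ((of_nat j - of_nat a - 1) gchoose (K - n)))"
      by (simp only: ac_simps)
    also have "\<dots> = (-1)^K * (((of_nat a - z) gchoose n) * ((of_nat j - of_nat a - 1) gchoose (K - n)))"
      by (simp only: c3)
    finally show "(-1)^n * ((of_nat a - z) gchoose n) * of_nat ((a - (i+n)) choose (j - (i+n))) =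
        (-1)^K * (((of_nat a - z) gchoose n) * ((of_nat j - of_nat a - 1) gchoose (K - n)))" .
  qed
  also have "\<dots> = (-1)^K * (\<Sum>n=0..K. ((of_nat a - z) gchoose n) * ((of_nat j - of_nat a - 1) gchoose (K - n)))"
    by (simp add: sum_distrib_left atMost_atLeast0)
  also have "\<dots> = (-1)^K * ((of_nat a - z + (of_nat j - of_nat a - 1)) gchoose K)"
    unfolding gbinomial_Vandermonde ..
  also have "\<dots> = (-1)^K * ((of_nat K - (z - of_nat i) - 1) gchoose K)"
    using ij unfolding K_def by (simp add: of_nat_diff algebra_simps)
  also have "\<dots> = (z - of_nat i) gchoose K"
    using gbinomial_negated_upper[of "z - of_nat i" K] by (simp add: mult.assoc[symmetric] power_add[symmetric])
  finally show ?thesis unfolding K_def .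
qed

lemma K_main:
  fixes z :: complex
  assumes ja: "j \<le> a"
  shows "(\<Sum>m\<le>j. of_nat ((a - m) choose (j - m)) * (\<Sum>i\<le>m. (z gchoose i) * ((-1)^(m-i) * ((of_nat a - z) gchoose (m-i)))))
     = 2^j * (z gchoose j)"
proof -
  define g where "g i n = (z gchoose i) * ((-1)^n * ((of_nat a - z) gchoose n)) * of_nat ((a - (i+n)) choose (j - (i+n)))" for i n
  have "(\<Sum>m\<le>j. of_nat ((a - m) choose (j - m)) * (\<Sum>i\<le>m. (z gchoose i) * ((-1)^(m-i) * ((of_nat a - z) gchoose (m-i)))))
      = (\<Sum>m\<le>j. \<Sum>i\<le>m. g i (m - i))"
    by (rule sum.cong[OF refl]) (auto simp: g_def sum_distrib_left algebra_simps intro!: sum.cong)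
  also have "\<dots> = (\<Sum>i\<le>j. \<Sum>n\<le>j-i. g i n)"
    by (rule tri_sum'[symmetric])
  also have "\<dots> = (\<Sum>i\<le>j. (z gchoose i) * ((z - of_nat i) gchoose (j - i)))"
  proof (rule sum.cong[OF refl])
    fix i assume "i \<in> {..j}"
    then have ij: "i \<le> j" by simp
    have "(\<Sum>n\<le>j-i. g i n) = (z gchoose i) * (\<Sum>n\<le>j-i. (-1)^n * ((of_nat a - z) gchoose n) * of_nat ((a - (i+n)) choose (j - (i+n))))"
      by (simp add: g_def sum_distrib_left algebra_simps)
    also have "\<dots> = (z gchoose i) * ((z - of_nat i) gchoose (j - i))"
      unfolding inner_sum[OF ij ja] ..
    finally show "(\<Sum>n\<le>j-i. g i n) = (z gchoose i) * ((z - of_nat i) gchoose (j - i))" .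
  qed
  also have "\<dots> = (\<Sum>i\<le>j. (z gchoose j) * of_nat (j choose i))"
  proof (rule sum.cong[OF refl])
    fix i assume "i \<in> {..j}"
    then have ij: "i \<le> j" by simp
    show "(z gchoose i) * ((z - of_nat i) gchoose (j - i)) = (z gchoose j) * of_nat (j choose i)"
      unfolding binomial_gbinomial using gbinomial_trinomial_revision[OF ij, of z] by simp
  qed
  also have "\<dots> = (z gchoose j) * of_nat (\<Sum>i\<le>j. j choose i)"
    by (simp add: sum_distrib_left)
  also have "\<dots> = 2^j * (z gchoose j)"
    unfolding choose_row_sum by simp
  finally show ?thesis .
qed

lemma K_ident:
  assumes ja: "j \<le> a"
  shows "(\<Sum>m\<le>j. 1 / 2^m * of_nat (a choose m) * Cay m (2*z - of_nat a) (of_nat a) *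
      (of_nat (fact (j-m) * ((a-m) choose (j-m)) * ((a-m) choose (j-m))) / 2^(j-m)))
    = of_nat (fact j * (a choose j)) * (z gchoose j)"
proof -
  define T where "T m = (\<Sum>i\<le>m. (z gchoose i) * ((-1)^(m-i) * ((of_nat a - z) gchoose (m-i))))" for m
  have "(\<Sum>m\<le>j. 1 / 2^m * of_nat (a choose m) * Cay m (2*z - of_nat a) (of_nat a) *
      (of_nat (fact (j-m) * ((a-m) choose (j-m)) * ((a-m) choose (j-m))) / 2^(j-m)))
     = (\<Sum>m\<le>j. of_nat (fact j * (a choose j)) / 2^j * (of_nat ((a - m) choose (j - m)) * T m))"
  proof (rule sum.cong[OF refl])
    fix m assume "m \<in> {..j}"
    then have mj: "m \<le> j" by simp
    have p2: "(2::complex)^m * 2^(j-m) = 2^j" using mj by (simp add: power_add[symmetric])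
    have cm: "(a choose m) * ((a - m) choose (j - m)) = (a choose j) * (j choose m)"
      by (rule choose_mult2[OF mj])
    have fj: "fact m * fact (j - m) * (j choose m) = fact j" by (rule binomial_fact_lemma[OF mj])
    have nat_eq: "(a choose m) * fact m * (fact (j-m) * ((a-m) choose (j-m)) * ((a-m) choose (j-m)))
        = fact j * (a choose j) * ((a-m) choose (j-m))"
    proof -
      have "(a choose m) * fact m * (fact (j-m) * ((a-m) choose (j-m)) * ((a-m) choose (j-m)))
          = ((a choose m) * ((a-m) choose (j-m))) * (fact m * fact (j-m)) * ((a-m) choose (j-m))"
        by (simp only: ac_simps)
      also have "\<dots> = (a choose j) * (fact m * fact (j - m) * (j choose m)) * ((a-m) choose (j-m))"
        unfolding cm by (simp only: ac_simps)
      also have "\<dots> = fact j * (a choose j) * ((a-m) choose (j-m))"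
        unfolding fj by (simp only: ac_simps)
      finally show ?thesis .
    qed
    have nat_eq': "(of_nat (a choose m) * fact m * of_nat (fact (j-m) * ((a-m) choose (j-m)) * ((a-m) choose (j-m))) :: complex)
        = of_nat (fact j * (a choose j)) * of_nat ((a-m) choose (j-m))"
      using arg_cong[OF nat_eq, of "of_nat :: nat \<Rightarrow> complex"] by simp
    have "1 / 2^m * of_nat (a choose m) * Cay m (2*z - of_nat a) (of_nat a) *
      (of_nat (fact (j-m) * ((a-m) choose (j-m)) * ((a-m) choose (j-m))) / 2^(j-m))
      = (of_nat (a choose m) * fact m * of_nat (fact (j-m) * ((a-m) choose (j-m)) * ((a-m) choose (j-m)))) * T m / (2^m * 2^(j-m))"
      unfolding Cay_gch T_def by (simp add: field_simps)
    also have "\<dots> = of_nat (fact j * (a choose j)) / 2^j * (of_nat ((a - m) choose (j - m)) * T m)"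
      unfolding nat_eq' p2 by (simp add: field_simps)
    finally show "1 / 2^m * of_nat (a choose m) * Cay m (2*z - of_nat a) (of_nat a) *
      (of_nat (fact (j-m) * ((a-m) choose (j-m)) * ((a-m) choose (j-m))) / 2^(j-m))
      = of_nat (fact j * (a choose j)) / 2^j * (of_nat ((a - m) choose (j - m)) * T m)" .
  qed
  also have "\<dots> = of_nat (fact j * (a choose j)) / 2^j * (\<Sum>m\<le>j. of_nat ((a - m) choose (j - m)) * T m)"
    by (simp add: sum_distrib_left)
  also have "\<dots> = of_nat (fact j * (a choose j)) * (z gchoose j)"
    unfolding T_def K_main[OF ja] by simp
  finally show ?thesis .
qed

lemma Dc_NF:
  assumes h: "smooth3 h"
  shows "Dc (2*z - of_nat a) a h = (\<lambda>x. \<Sum>j\<le>a. of_nat (fact j * (a choose j)) * (z gchoose j) * E (a-j) (a-j) j h x)"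
  unfolding Dc_NF1[OF h] bt_def Bn_def
  using K_ident[of _ a z] by simp

lemma sum_only0: "(\<forall>j. 0 < j \<longrightarrow> f j = 0) \<Longrightarrow> (\<Sum>j\<le>(a::nat). f j) = f 0"
  by (induction a) simp_all

lemma sum_range:
  fixes n N :: nat
  assumes "n \<le> N" "\<forall>j. n < j \<longrightarrow> f j = 0"
  shows "(\<Sum>j\<le>n. f j) = (\<Sum>j\<le>N. f j)"
  by (rule sum.mono_neutral_left) (use assms in auto)

lemma E_a00: "E a 0 0 h = (D1^^a) h" by (simp add: E_def)
lemma E_ab0: "E a b 0 h = (D1^^a) ((D2^^b) h)" by (simp add: E_def)

lemma NO21:
  assumes h: "smooth3 h"
  shows "(D2^^b) ((D1^^a) h) = (\<lambda>x. \<Sum>j\<le>b. of_nat (fact j * (a choose j) * (b choose j)) * E (a-j) (b-j) j h x)"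
  using D2p_E[OF h, of b a 0 0] unfolding E_a00 by simp

lemma Dplus_eq:
  assumes h: "smooth3 h"
  shows "Dplus a b h = (D2^^b) ((D1^^a) h)"
proof (rule ext)
  fix x
  define f where "f j = (of_nat (fact j * (a choose j) * (b choose j)) :: complex) * E (a-j) (b-j) j h x" for j
  have "Dplus a b h x = (\<Sum>j\<le>a. f j)"
    unfolding Dpm_NF[OF h] f_def by simp
  also have "\<dots> = (\<Sum>j\<le>a+b. f j)"
    by (rule sum_range) (auto simp: f_def)
  also have "\<dots> = (\<Sum>j\<le>b. f j)"
    by (rule sum_range[symmetric]) (auto simp: f_def)
  also have "\<dots> = (D2^^b) ((D1^^a) h) x"
    unfolding NO21[OF h] f_def ..
  finally show "Dplus a b h x = (D2^^b) ((D1^^a) h) x" .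
qed

lemma Dminus_E:
  assumes h: "smooth3 h"
  shows "Dminus a b h = E a b 0 h"
proof (rule ext)
  fix x
  have "Dminus a b h x = (\<Sum>j\<le>a. of_nat (fact j * (a choose j) * (b choose j)) * ((1 + -1)/2)^j * E (a-j) (b-j) j h x)"
    unfolding Dpm_NF[OF h] ..
  also have "\<dots> = E a b 0 h x"
    by (subst sum_only0) simp_all
  finally show "Dminus a b h x = E a b 0 h x" .
qed

lemma Dminus_eq:
  assumes h: "smooth3 h"
  shows "Dminus a b h = (D1^^a) ((D2^^b) h)"
  using Dminus_E[OF h] E_ab0 by simp

lemma D1p_sum:
  fixes N :: nat
  assumes h: "smooth3 h"
  shows "(D1^^n) (\<lambda>x. \<Sum>j\<le>N. c j * E (a' j) (b' j) (c' j) h x) = (\<lambda>x. \<Sum>j\<le>N. c j * E (n + a' j) (b' j) (c' j) h x)"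
  by (subst linop_sum[OF linop_pow[OF linop_D1]]) (auto intro: smE h simp: D1p_E)

lemma D2p_sum:
  fixes N :: nat
  assumes h: "smooth3 h"
  shows "(D2^^n) (\<lambda>x. \<Sum>j\<le>N. c j * E (a' j) (b' j) (c' j) h x) = (\<lambda>x. \<Sum>j\<le>N. c j * (D2^^n) (E (a' j) (b' j) (c' j) h) x)"
  by (rule linop_sum[OF linop_pow[OF linop_D2]]) (auto intro: smE h)

lemma coef_eq: "(of_nat (fact j * (l choose j)) :: complex) * (of_nat k gchoose j) = of_nat (fact j * (k choose j) * (l choose j))"
  by (simp add: binomial_gbinomial[symmetric])

lemma claim_c3:
  assumes f: "smooth3 f" and kl: "k < l"
  shows "Dc (of_int (2 * int k - int l)) l f = (D1^^(l-k)) (Dplus k l f)"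
proof -
  have s: "(of_int (2 * int k - int l) :: complex) = 2 * of_nat k - of_nat l" by simp
  show ?thesis
  proof (rule ext)
    fix x
    have "Dc (of_int (2 * int k - int l)) l f x = (\<Sum>j\<le>l. of_nat (fact j * (l choose j)) * (of_nat k gchoose j) * E (l-j) (l-j) j f x)"
      unfolding s Dc_NF[OF f] ..
    also have "\<dots> = (\<Sum>j\<le>l. of_nat (fact j * (k choose j) * (l choose j)) * E (l - k + (k-j)) (l-j) j f x)"
    proof (rule sum.cong[OF refl])
      fix j assume "j \<in> {..l}"
      show "of_nat (fact j * (l choose j)) * (of_nat k gchoose j) * E (l-j) (l-j) j f x =
            of_nat (fact j * (k choose j) * (l choose j)) * E (l - k + (k-j)) (l-j) j f x"
      proof (cases "j \<le> k")
        case True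
        then have "l - k + (k - j) = l - j" using kl by simp
        then show ?thesis unfolding coef_eq by simp
      next
        case False then show ?thesis by (simp add: binomial_gbinomial[symmetric])
      qed
    qed
    also have "\<dots> = (D1^^(l-k)) (Dplus k l f) x"
      unfolding Dplus_eq[OF f] NO21[OF f] D1p_sum[OF f] ..
    finally show "Dc (of_int (2 * int k - int l)) l f x = (D1^^(l-k)) (Dplus k l f) x" .
  qed
qed

lemma claim_d1:
  assumes f: "smooth3 f" and kl: "l < k"
  shows "(D1^^(k-l)) (Dc (of_int (2 * int k - int l)) l f) = Dplus k l f"
proof -
  have s: "(of_int (2 * int k - int l) :: complex) = 2 * of_nat k - of_nat l" by simp
  show ?thesis
  proof (rule ext)
    fix x
    have "(D1^^(k-l)) (Dc (of_int (2 * int k - int l)) l f) x =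
       (\<Sum>j\<le>l. of_nat (fact j * (l choose j)) * (of_nat k gchoose j) * E (k - l + (l-j)) (l-j) j f x)"
      unfolding s Dc_NF[OF f] D1p_sum[OF f] ..
    also have "\<dots> = (\<Sum>j\<le>l. of_nat (fact j * (k choose j) * (l choose j)) * E (k-j) (l-j) j f x)"
    proof (rule sum.cong[OF refl])
      fix j assume "j \<in> {..l}"
      then have "k - l + (l - j) = k - j" using kl by simp
      then show "of_nat (fact j * (l choose j)) * (of_nat k gchoose j) * E (k - l + (l-j)) (l-j) j f x =
           of_nat (fact j * (k choose j) * (l choose j)) * E (k-j) (l-j) j f x"
        unfolding coef_eq by simp
    qed
    also have "\<dots> = Dplus k l f x"
      unfolding Dplus_eq[OF f] NO21[OF f] ..
    finally show "(D1^^(k-l)) (Dc (of_int (2 * int k - int l)) l f) x = Dplus k l f x" .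
  qed
qed

lemma claim_e3:
  assumes f: "smooth3 f" and kl: "l < k"
  shows "Dc (of_int (int k - 2 * int l)) k f = Dplus k (k-l) ((D2^^l) f)"
proof -
  have s: "(of_int (int k - 2 * int l) :: complex) = 2 * of_nat (k - l) - of_nat k"
    using kl by (simp add: of_nat_diff)
  have f2: "smooth3 ((D2^^l) f)" by (rule smp2[OF f])
  show ?thesis
  proof (rule ext)
    fix x
    define g where "g j = (of_nat (fact j * (k choose j) * ((k - l) choose j)) :: complex) * E (k-j) (k-j) j f x" for j
    have "Dc (of_int (int k - 2 * int l)) k f x = (\<Sum>j\<le>k. of_nat (fact j * (k choose j)) * (of_nat (k-l) gchoose j) * E (k-j) (k-j) j f x)"
      unfolding s Dc_NF[OF f] ..
    also have "\<dots> = (\<Sum>j\<le>k. g j)"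
      unfolding g_def by (simp add: binomial_gbinomial[symmetric])
    also have "\<dots> = (\<Sum>j\<le>k-l. g j)"
      by (rule sum_range[symmetric]) (auto simp: g_def)
    also have "\<dots> = (\<Sum>i\<le>k-l. of_nat (fact i * (k choose i) * ((k - l) choose i)) * E (k-i) (l + (k-l) - i) (0+i) f x)"
      unfolding g_def using kl by simp
    also have "\<dots> = (D2^^(k-l)) (E k l 0 f) x"
      unfolding D2p_E[OF f] ..
    also have "\<dots> = Dplus k (k-l) ((D2^^l) f) x"
      unfolding Dplus_eq[OF f2] E_ab0 ..
    finally show "Dc (of_int (int k - 2 * int l)) k f x = Dplus k (k-l) ((D2^^l) f) x" .
  qed
qed

lemma claim_5:
  assumes f: "smooth3 f"
  shows "Dc (of_nat k) k f = Dplus k k f"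
proof -
  have s: "(of_nat k :: complex) = 2 * of_nat k - of_nat k" by simp
  show ?thesis
  proof (rule ext)
    fix x
    have "Dc (of_nat k) k f x = (\<Sum>j\<le>k. of_nat (fact j * (k choose j)) * (of_nat k gchoose j) * E (k-j) (k-j) j f x)"
      by (subst s) (simp only: Dc_NF[OF f])
    also have "\<dots> = Dplus k k f x"
      unfolding Dpm_NF[OF f] coef_eq by simp
    finally show "Dc (of_nat k) k f x = Dplus k k f x" .
  qed
qed

lemma claim_6:
  assumes f: "smooth3 f"
  shows "Dc (- of_nat k) k f = Dminus k k f"
proof -
  have s: "(- of_nat k :: complex) = 2 * 0 - of_nat k" by simp
  show ?thesis
  proof (rule ext)
    fix x
    have "Dc (- of_nat k) k f x = (\<Sum>j\<le>k. of_nat (fact j * (k choose j)) * (0 gchoose j) * E (k-j) (k-j) j f x)"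
      by (subst s) (simp only: Dc_NF[OF f])
    also have "\<dots> = E k k 0 f x"
      by (subst sum_only0) (simp_all add: gbinomial_0_left)
    also have "\<dots> = Dminus k k f x"
      unfolding Dminus_E[OF f] ..
    finally show "Dc (- of_nat k) k f x = Dminus k k f x" .
  qed
qed

lemma claim_g1:
  assumes f: "smooth3 f" and kl: "k < l"
  shows "(D2^^(l-k)) (Dc (of_int (int k - 2 * int l)) k f) = Dminus k l f"
proof -
  define n where "n = l - k"
  define z :: complex where "z = - of_nat n"
  have s: "(of_int (int k - 2 * int l) :: complex) = 2 * z - of_nat k"
    using kl by (simp add: z_def n_def of_nat_diff)
  show ?thesis
  proof (rule ext)
    fix x
    define c where "c j = of_nat (fact j * (k choose j)) * (z gchoose j)" for j
    define F where "F j i = c j * (of_nat (fact i * ((k-j) choose i) * (n choose i)) * E (k-j-i) (k-j+n-i) (j+i) f x)" for j i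
    have "(D2^^(l-k)) (Dc (of_int (int k - 2 * int l)) k f) x =
        (\<Sum>j\<le>k. c j * (D2^^n) (E (k-j) (k-j) j f) x)"
      unfolding s Dc_NF[OF f] D2p_sum[OF f] n_def c_def ..
    also have "\<dots> = (\<Sum>j\<le>k. \<Sum>i\<le>n. F j i)"
      unfolding D2p_E[OF f] F_def by (simp add: sum_distrib_left)
    also have "\<dots> = (\<Sum>j\<le>k. \<Sum>i\<le>k-j. F j i)"
    proof (rule sum.cong[OF refl])
      fix j assume "j \<in> {..k}"
      have "(\<Sum>i\<le>n. F j i) = (\<Sum>i\<le>n+k. F j i)"
        by (rule sum_range) (auto simp: F_def)
      also have "\<dots> = (\<Sum>i\<le>k-j. F j i)"
        by (rule sum_range[symmetric]) (auto simp: F_def)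
      finally show "(\<Sum>i\<le>n. F j i) = (\<Sum>i\<le>k-j. F j i)" .
    qed
    also have "\<dots> = (\<Sum>t\<le>k. \<Sum>j\<le>t. F j (t-j))"
      by (rule tri_sum)
    also have "\<dots> = (\<Sum>t\<le>k. of_nat (fact t * (k choose t)) * (0 gchoose t) * E (k-t) (l-t) t f x)"
    proof (rule sum.cong[OF refl])
      fix t assume "t \<in> {..k}"
      then have tk: "t \<le> k" by simp
      have Fj: "F j (t-j) = of_nat (fact t * (k choose t)) * ((z gchoose j) * (of_nat n gchoose (t-j))) * E (k-t) (l-t) t f x"
        if jt: "j \<le> t" for j
      proof -
        have idx: "k - j - (t - j) = k - t" "k - j + n - (t - j) = l - t" "j + (t - j) = t"
          using jt tk kl unfolding n_def by auto
        have fj: "fact j * fact (t - j) * (t choose j) = fact t" by (rule binomial_fact_lemma[OF jt])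
        have nat_eq: "fact j * (k choose j) * (fact (t-j) * ((k-j) choose (t-j)))
             = fact t * (k choose t)"
        proof -
          have "fact j * (k choose j) * (fact (t-j) * ((k-j) choose (t-j)))
              = (fact j * fact (t-j)) * ((k choose j) * ((k-j) choose (t-j)))" by (simp only: ac_simps)
          also have "\<dots> = (fact j * fact (t-j) * (t choose j)) * (k choose t)"
            unfolding choose_mult2[OF jt] by (simp only: ac_simps)
          finally show ?thesis unfolding fj .
        qed
        have nat_eq': "(of_nat (fact j * (k choose j)) :: complex) * of_nat (fact (t-j) * ((k-j) choose (t-j)) * (n choose (t-j)))
             = of_nat (fact t * (k choose t)) * of_nat (n choose (t-j))"
          using arg_cong[OF nat_eq, of "of_nat :: nat \<Rightarrow> complex"] by (simp add: algebra_simps)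
        have "F j (t-j) = ((of_nat (fact j * (k choose j)) :: complex) * of_nat (fact (t-j) * ((k-j) choose (t-j)) * (n choose (t-j))))
             * (z gchoose j) * E (k-t) (l-t) t f x"
          unfolding F_def c_def idx by (simp only: ac_simps)
        also have "\<dots> = of_nat (fact t * (k choose t)) * ((z gchoose j) * (of_nat n gchoose (t-j))) * E (k-t) (l-t) t f x"
          unfolding nat_eq' binomial_gbinomial by (simp only: ac_simps)
        finally show ?thesis .
      qed
      have "(\<Sum>j\<le>t. F j (t-j)) = (\<Sum>j\<le>t. of_nat (fact t * (k choose t)) * ((z gchoose j) * (of_nat n gchoose (t-j))) * E (k-t) (l-t) t f x)"
        by (rule sum.cong[OF refl]) (simp add: Fj)
      also have "\<dots> = of_nat (fact t * (k choose t)) * (\<Sum>j=0..t. (z gchoose j) * (of_nat n gchoose (t-j))) * E (k-t) (l-t) t f x"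
        by (simp add: sum_distrib_left sum_distrib_right atMost_atLeast0)
      also have "\<dots> = of_nat (fact t * (k choose t)) * (0 gchoose t) * E (k-t) (l-t) t f x"
        unfolding gbinomial_Vandermonde z_def by simp
      finally show "(\<Sum>j\<le>t. F j (t-j)) = of_nat (fact t * (k choose t)) * (0 gchoose t) * E (k-t) (l-t) t f x" .
    qed
    also have "\<dots> = E k l 0 f x"
      by (subst sum_only0) (simp_all add: gbinomial_0_left)
    also have "\<dots> = Dminus k l f x"
      unfolding Dminus_E[OF f] ..
    finally show "(D2^^(l-k)) (Dc (of_int (int k - 2 * int l)) k f) x = Dminus k l f x" .
  qed
qed

theorem theorem8p8:
  fixes k l :: nat and f :: "R3 \<Rightarrow> complex"
  assumes "1 \<le> k" and "1 \<le> l" and "smooth3 f"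
  shows
   "(k < l \<longrightarrow>
       Dplus k l f = (D2 ^^ l) ((D1 ^^ k) f) \<and>
       Dminus (l - k) l f = (D1 ^^ (l - k)) ((D2 ^^ l) f) \<and>
       Dc (of_int (2 * int k - int l)) l f = (D1 ^^ (l - k)) (Dplus k l f) \<and>
       (D1 ^^ (l - k)) (Dplus k l f) = Dminus (l - k) l ((D1 ^^ k) f) \<and>
       Dminus (l - k) l ((D1 ^^ k) f) = (D1 ^^ (l - k)) ((D2 ^^ l) ((D1 ^^ k) f)))
  \<and> (k > l \<longrightarrow>
       (D1 ^^ (k - l)) (Dc (of_int (2 * int k - int l)) l f) = Dplus k l f \<and>
       Dplus k l f = (D2 ^^ l) ((D1 ^^ k) f))
  \<and> (k > l \<longrightarrow>
       Dplus k (k - l) f = (D2 ^^ (k - l)) ((D1 ^^ k) f) \<and>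
       Dminus k l f = (D1 ^^ k) ((D2 ^^ l) f) \<and>
       Dc (of_int (int k - 2 * int l)) k f = Dplus k (k - l) ((D2 ^^ l) f) \<and>
       Dplus k (k - l) ((D2 ^^ l) f) = (D2 ^^ (k - l)) (Dminus k l f) \<and>
       (D2 ^^ (k - l)) (Dminus k l f) = (D2 ^^ (k - l)) ((D1 ^^ k) ((D2 ^^ l) f)))
  \<and> (k < l \<longrightarrow>
       (D2 ^^ (l - k)) (Dc (of_int (int k - 2 * int l)) k f) = Dminus k l f \<and>
       Dminus k l f = (D1 ^^ k) ((D2 ^^ l) f))
  \<and> (Dc (of_nat k) k f = Dplus k k f \<and> Dplus k k f = (D2 ^^ k) ((D1 ^^ k) f))
  \<and> (Dc (- of_nat k) k f = Dminus k k f \<and> Dminus k k f = (D1 ^^ k) ((D2 ^^ k) f))"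
proof -
  have f: "smooth3 f" by (rule assms(3))
  have P1: "k < l \<longrightarrow>
       Dplus k l f = (D2 ^^ l) ((D1 ^^ k) f) \<and>
       Dminus (l - k) l f = (D1 ^^ (l - k)) ((D2 ^^ l) f) \<and>
       Dc (of_int (2 * int k - int l)) l f = (D1 ^^ (l - k)) (Dplus k l f) \<and>
       (D1 ^^ (l - k)) (Dplus k l f) = Dminus (l - k) l ((D1 ^^ k) f) \<and>
       Dminus (l - k) l ((D1 ^^ k) f) = (D1 ^^ (l - k)) ((D2 ^^ l) ((D1 ^^ k) f))"
  proof (intro impI conjI)
    assume kl: "k < l"
    show "Dplus k l f = (D2 ^^ l) ((D1 ^^ k) f)" by (rule Dplus_eq[OF f])
    show "Dminus (l - k) l f = (D1 ^^ (l - k)) ((D2 ^^ l) f)" by (rule Dminus_eq[OF f])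
    show "Dc (of_int (2 * int k - int l)) l f = (D1 ^^ (l - k)) (Dplus k l f)" by (rule claim_c3[OF f kl])
    show "(D1 ^^ (l - k)) (Dplus k l f) = Dminus (l - k) l ((D1 ^^ k) f)"
      unfolding Dplus_eq[OF f] Dminus_eq[OF smp1[OF f]] ..
    show "Dminus (l - k) l ((D1 ^^ k) f) = (D1 ^^ (l - k)) ((D2 ^^ l) ((D1 ^^ k) f))"
      by (rule Dminus_eq[OF smp1[OF f]])
  qed
  have P2: "k > l \<longrightarrow>
       (D1 ^^ (k - l)) (Dc (of_int (2 * int k - int l)) l f) = Dplus k l f \<and>
       Dplus k l f = (D2 ^^ l) ((D1 ^^ k) f)"
  proof (intro impI conjI)
    assume kl: "k > l"
    show "(D1 ^^ (k - l)) (Dc (of_int (2 * int k - int l)) l f) = Dplus k l f" by (rule claim_d1[OF f kl])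
    show "Dplus k l f = (D2 ^^ l) ((D1 ^^ k) f)" by (rule Dplus_eq[OF f])
  qed
  have P3: "k > l \<longrightarrow>
       Dplus k (k - l) f = (D2 ^^ (k - l)) ((D1 ^^ k) f) \<and>
       Dminus k l f = (D1 ^^ k) ((D2 ^^ l) f) \<and>
       Dc (of_int (int k - 2 * int l)) k f = Dplus k (k - l) ((D2 ^^ l) f) \<and>
       Dplus k (k - l) ((D2 ^^ l) f) = (D2 ^^ (k - l)) (Dminus k l f) \<and>
       (D2 ^^ (k - l)) (Dminus k l f) = (D2 ^^ (k - l)) ((D1 ^^ k) ((D2 ^^ l) f))"
  proof (intro impI conjI)
    assume kl: "k > l"
    show "Dplus k (k - l) f = (D2 ^^ (k - l)) ((D1 ^^ k) f)" by (rule Dplus_eq[OF f])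
    show "Dminus k l f = (D1 ^^ k) ((D2 ^^ l) f)" by (rule Dminus_eq[OF f])
    show "Dc (of_int (int k - 2 * int l)) k f = Dplus k (k - l) ((D2 ^^ l) f)" by (rule claim_e3[OF f kl])
    show "Dplus k (k - l) ((D2 ^^ l) f) = (D2 ^^ (k - l)) (Dminus k l f)"
      unfolding Dplus_eq[OF smp2[OF f]] Dminus_eq[OF f] ..
    show "(D2 ^^ (k - l)) (Dminus k l f) = (D2 ^^ (k - l)) ((D1 ^^ k) ((D2 ^^ l) f))"
      unfolding Dminus_eq[OF f] ..
  qed
  have P4: "k < l \<longrightarrow>
       (D2 ^^ (l - k)) (Dc (of_int (int k - 2 * int l)) k f) = Dminus k l f \<and>
       Dminus k l f = (D1 ^^ k) ((D2 ^^ l) f)"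
  proof (intro impI conjI)
    assume kl: "k < l"
    show "(D2 ^^ (l - k)) (Dc (of_int (int k - 2 * int l)) k f) = Dminus k l f" by (rule claim_g1[OF f kl])
    show "Dminus k l f = (D1 ^^ k) ((D2 ^^ l) f)" by (rule Dminus_eq[OF f])
  qed
  have P5: "Dc (of_nat k) k f = Dplus k k f \<and> Dplus k k f = (D2 ^^ k) ((D1 ^^ k) f)"
    using claim_5[OF f] Dplus_eq[OF f] by blast
  have P6: "Dc (- of_nat k) k f = Dminus k k f \<and> Dminus k k f = (D1 ^^ k) ((D2 ^^ k) f)"
    using claim_6[OF f] Dminus_eq[OF f] by blast
  show ?thesis by (rule conjI[OF P1 conjI[OF P2 conjI[OF P3 conjI[OF P4 conjI[OF P5 P6]]]]])
qed

end
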